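(* Let $k \in \mathbb{N}$. Every linear $k$-DCFG $G$ is equivalent to (i.e. generates the same language as) some $k$-DCFG $G'=\langle N, \Sigma, P, S\rangle$ all of whose rules have one of the following forms, where $A, B \in N$ and $u \in \Theta$: (1) $A \to u\cdot B$ or $A \to B \cdot u$, with $|u| \leq 1$ and $u \neq \epsilon$; (2) $A \to B \odot_j u$, with $|u| \leq 1$; (3) $A \to u$, with $|u| = 1$; (4) $S \to \epsilon$ (where $S$ is the start symbol).
   Context: Fix a finite alphabet $\Sigma$; $\Sigma^*$ is the set of words over $\Sigma$ and $\epsilon$ the empty word. $\Theta_k$ is the set of tuples $(u_0,\ldots,u_k)$ with $u_i\in\Sigma^*$, and $\Theta=\bigcup_{k\in\mathbb{N}}\Theta_k$; the rank of $(u_0,\ldots,u_k)$ is $k$, and its length $|u|$ is the sum of the lengths of its components. Rank-$0$ tuples are identified with words; in particular $\epsilon$ also denotes the rank-$0$ tuple $(\epsilon)$. Concatenation $\cdot:\Theta_i\times\Theta_j\to\Theta_{i+j}$ is $(x_0,\ldots,x_i)\cdot(y_0,\ldots,y_j)=(x_0,\ldots,x_{i-1},x_iy_0,y_1,\ldots,y_j)$, and for $1\le l\le i$ intercalation $\odot_l:\Theta_i\times\Theta_j\to\Theta_{i+j-1}$ is $(x_0,\ldots,x_i)\odot_l(y_0,\ldots,y_j)=(x_0,\ldots,x_{l-2},x_{l-1}y_0,y_1,\ldots,y_{j-1},y_jx_l,x_{l+1},\ldots,x_i)$. Let $N$ be a finite set of nonterminals disjoint from $\Sigma$ with a rank function $\mathrm{rk}:N\to\mathbb{N}$.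 The set of $k$-correct terms $\mathrm{Tm}_k(N,\Sigma)$ and their ranks are defined inductively: every tuple in $\Theta_j$ with $j\le k$ is a term of rank $j$, and every nonterminal $A$ with $\mathrm{rk}(A)\le k$ is a term of rank $\mathrm{rk}(A)$; if $\alpha,\beta$ are terms with $\mathrm{rk}\,\alpha+\mathrm{rk}\,\beta\le k$ then $(\alpha\cdot\beta)$ is a term of rank $\mathrm{rk}\,\alpha+\mathrm{rk}\,\beta$; if $1\le j\le k$, $\mathrm{rk}\,\alpha\ge j$ and $\mathrm{rk}\,\alpha+\mathrm{rk}\,\beta\le k+1$ then $(\alpha\odot_j\beta)$ is a term of rank $\mathrm{rk}\,\alpha+\mathrm{rk}\,\beta-1$. A ground term is one containing no nonterminals; its value $\nu(\alpha)\in\Theta$ is obtained by interpreting $\cdot$ and $\odot_j$ as the operations above. A context $C[x]$ is a term with one leaf occurrence of a variable $x$ of some rank; $C[\beta]$ is the result of substituting a term $\beta$ of the same rank for $x$. A $k$-displacement context-free grammar ($k$-DCFG) is $G=\langle N,\Sigma,P,S\rangle$ where $S\in N$ has rank $0$ and $P$ is a finite set of rules $A\to\alpha$ with $A\in N$, $\alpha\in\mathrm{Tm}_k(N,\Sigma)$ and $\mathrm{rk}(A)=\mathrm{rk}(\alpha)$. Standing assumption: all tuples occurring as leaves of right-hand sides of rules have length at most $1$. Derivability $\vdash_G$ is the smallest reflexive transitive relation between nonterminals and terms such that $(B\to\beta)\in P$ and $A\vdash_G C[B]$ imply $A\vdash_G C[\beta]$ for any context $C$. $L_G(A)=\{\nu(\alpha)\mid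 A\vdash_G\alpha,\ \alpha \text{ ground}\}$ and $L(G)=L_G(S)$. Two grammars are equivalent if they generate the same language. A term is linear if it contains at most one occurrence of a nonterminal; a grammar is linear if the right-hand sides of all its rules are linear. All right-hand sides in the claim are required to be $k$-correct terms of the same rank as the left-hand side. *)

theory Defs
  imports Main
begin

text \<open>A tuple (u_0,...,u_k) in Theta_k is a nonempty list of words of length k+1.\<close>

type_synonym 'a tuple = "'a list list"

definition tup_rank :: "'a tuple \<Rightarrow> nat" where
  "tup_rank u = length u - 1"

definition tup_len :: "'a tuple \<Rightarrow> nat" where
  "tup_len u = sum_list (map length u)"

definition eps_tup :: "'a tuple" where
  "eps_tup = [[]]"

definition tup_cat :: "'a tuple \<Rightarrow> 'a tuple \<Rightarrow> 'a tuple" where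
  "tup_cat xs ys = butlast xs @ [last xs @ hd ys] @ tl ys"

text \<open>Intercalation for 1 <= l <= i:
  (x_0..x_i) odot_l (y_0..y_j) = (x_0..x_{l-2}, x_{l-1} y_0, y_1..y_{j-1}, y_j x_l, x_{l+1}..x_i).\<close>
definition tup_intc :: "nat \<Rightarrow> 'a tuple \<Rightarrow> 'a tuple \<Rightarrow> 'a tuple" where
  "tup_intc l xs ys = tup_cat (tup_cat (take l xs) ys) (drop l xs)"

datatype ('a, 'n) tm =
    Tup "'a tuple"
  | NT 'n
  | Cat "('a, 'n) tm" "('a, 'n) tm"
  | Intc nat "('a, 'n) tm" "('a, 'n) tm"

fun tm_rank :: "('n \<Rightarrow> nat) \<Rightarrow> ('a, 'n) tm \<Rightarrow> nat" where
  "tm_rank rk (Tup u) = tup_rank u"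
| "tm_rank rk (NT A) = rk A"
| "tm_rank rk (Cat a b) = tm_rank rk a + tm_rank rk b"
| "tm_rank rk (Intc j a b) = tm_rank rk a + tm_rank rk b - 1"

fun kcorrect :: "nat \<Rightarrow> ('n \<Rightarrow> nat) \<Rightarrow> ('a, 'n) tm \<Rightarrow> bool" where
  "kcorrect k rk (Tup u) = (u \<noteq> [] \<and> tup_rank u \<le> k)"
| "kcorrect k rk (NT A) = (rk A \<le> k)"
| "kcorrect k rk (Cat a b) =
     (kcorrect k rk a \<and> kcorrect k rk b \<and> tm_rank rk a + tm_rank rk b \<le> k)"
| "kcorrect k rk (Intc j a b) =
     (kcorrect k rk a \<and> kcorrect k rk b \<and> 1 \<le> j \<and> j \<le> k \<and>
      j \<le> tm_rank rk a \<and> tm_rank rk a + tm_rank rk b \<le> k + 1)"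

fun nts :: "('a, 'n) tm \<Rightarrow> 'n list" where
  "nts (Tup u) = []"
| "nts (NT A) = [A]"
| "nts (Cat a b) = nts a @ nts b"
| "nts (Intc j a b) = nts a @ nts b"

definition ground :: "('a, 'n) tm \<Rightarrow> bool" where
  "ground t \<longleftrightarrow> nts t = []"

fun leaf_tuples :: "('a, 'n) tm \<Rightarrow> 'a tuple list" where
  "leaf_tuples (Tup u) = [u]"
| "leaf_tuples (NT A) = []"
| "leaf_tuples (Cat a b) = leaf_tuples a @ leaf_tuples b"
| "leaf_tuples (Intc j a b) = leaf_tuples a @ leaf_tuples b"

fun val :: "('a, 'n) tm \<Rightarrow> 'a tuple" where
  "val (Tup u) = u"
| "val (NT A) = undefined"
| "val (Cat a b) = tup_cat (val a) (val b)"
| "val (Intc j a b) = tup_intc j (val a) (val b)"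

record ('a, 'n) dcfg =
  NTs :: "'n set"
  rk :: "'n \<Rightarrow> nat"
  Rules :: "('n \<times> ('a, 'n) tm) set"
  Start :: 'n

definition is_kDCFG :: "nat \<Rightarrow> ('a, 'n) dcfg \<Rightarrow> bool" where
  "is_kDCFG k G \<longleftrightarrow>
     finite (NTs G) \<and> Start G \<in> NTs G \<and> rk G (Start G) = 0 \<and>
     finite (Rules G) \<and>
     (\<forall>(A, \<alpha>) \<in> Rules G.
        A \<in> NTs G \<and> set (nts \<alpha>) \<subseteq> NTs G \<and>
        kcorrect k (rk G) \<alpha> \<and> tm_rank (rk G) \<alpha> = rk G A \<and>
        (\<forall>u \<in> set (leaf_tuples \<alpha>). tup_len u \<le> 1))"

inductive rstep :: "('n \<times> ('a, 'n) tm) set \<Rightarrow> ('a, 'n) tm \<Rightarrow> ('a, 'n) tm \<Rightarrow> bool"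
  for P where
  rule: "(B, \<beta>) \<in> P \<Longrightarrow> rstep P (NT B) \<beta>"
| catL: "rstep P a a' \<Longrightarrow> rstep P (Cat a b) (Cat a' b)"
| catR: "rstep P b b' \<Longrightarrow> rstep P (Cat a b) (Cat a b')"
| intcL: "rstep P a a' \<Longrightarrow> rstep P (Intc j a b) (Intc j a' b)"
| intcR: "rstep P b b' \<Longrightarrow> rstep P (Intc j a b) (Intc j a b')"

definition derives :: "('a, 'n) dcfg \<Rightarrow> 'n \<Rightarrow> ('a, 'n) tm \<Rightarrow> bool" where
  "derives G A \<alpha> \<longleftrightarrow> (rstep (Rules G))\<^sup>*\<^sup>* (NT A) \<alpha>"

definition LangNT :: "('a, 'n) dcfg \<Rightarrow> 'n \<Rightarrow> 'a tuple set" where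
  "LangNT G A = {val \<alpha> | \<alpha>. derives G A \<alpha> \<and> ground \<alpha>}"

definition Lang :: "('a, 'n) dcfg \<Rightarrow> 'a tuple set" where
  "Lang G = LangNT G (Start G)"

definition linear_tm :: "('a, 'n) tm \<Rightarrow> bool" where
  "linear_tm t \<longleftrightarrow> length (nts t) \<le> 1"

definition linear_dcfg :: "('a, 'n) dcfg \<Rightarrow> bool" where
  "linear_dcfg G \<longleftrightarrow> (\<forall>(A, \<alpha>) \<in> Rules G. linear_tm \<alpha>)"

definition nf_rule :: "('a, 'n) dcfg \<Rightarrow> 'n \<times> ('a, 'n) tm \<Rightarrow> bool" where
  "nf_rule G r \<longleftrightarrow>
     (\<exists>A B u. r = (A, Cat (Tup u) (NT B)) \<and> tup_len u \<le> 1 \<and> u \<noteq> eps_tup) \<or>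
     (\<exists>A B u. r = (A, Cat (NT B) (Tup u)) \<and> tup_len u \<le> 1 \<and> u \<noteq> eps_tup) \<or>
     (\<exists>A B j u. r = (A, Intc j (NT B) (Tup u)) \<and> tup_len u \<le> 1) \<or>
     (\<exists>A u. r = (A, Tup u) \<and> tup_len u = 1) \<or>
     r = (Start G, Tup eps_tup)"

end

theory Submission
  imports Defs
begin


section \<open>Semantics via tval\<close>

inductive tval :: "('n \<times> ('a, 'n) tm) set \<Rightarrow> ('a, 'n) tm \<Rightarrow> 'a tuple \<Rightarrow> bool" for R where
  tTup: "tval R (Tup u) u"
| tNT: "(A, \<beta>) \<in> R \<Longrightarrow> tval R \<beta> v \<Longrightarrow> tval R (NT A) v"
| tCat: "tval R a x \<Longrightarrow> tval R b y \<Longrightarrow> tval R (Cat a b) (tup_cat x y)"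
| tIntc: "tval R a x \<Longrightarrow> tval R b y \<Longrightarrow> tval R (Intc j a b) (tup_intc j x y)"

inductive_simps tval_Tup[simp]: "tval R (Tup u) v"
inductive_simps tval_NT: "tval R (NT A) v"
inductive_simps tval_Cat[simp]: "tval R (Cat a b) v"
inductive_simps tval_Intc[simp]: "tval R (Intc j a b) v"

fun ev :: "('n \<Rightarrow> 'a tuple set) \<Rightarrow> ('a, 'n) tm \<Rightarrow> 'a tuple set" where
  "ev S (Tup u) = {u}"
| "ev S (NT A) = S A"
| "ev S (Cat a b) = {tup_cat x y | x y. x \<in> ev S a \<and> y \<in> ev S b}"
| "ev S (Intc j a b) = {tup_intc j x y | x y. x \<in> ev S a \<and> y \<in> ev S b}"

definition LL :: "('n \<times> ('a, 'n) tm) set \<Rightarrow> 'n \<Rightarrow> 'a tuple set" where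
  "LL R A = {v. tval R (NT A) v}"

lemma tval_ev: "tval R \<alpha> v \<longleftrightarrow> v \<in> ev (LL R) \<alpha>"
proof (induction \<alpha> arbitrary: v)
  case (Tup x)
  then show ?case by simp
next
  case (NT x)
  then show ?case by (simp add: LL_def)
next
  case (Cat a b)
  then show ?case by simp
next
  case (Intc j a b)
  then show ?case by simp
qed

lemma LL_rule: assumes "(A, \<beta>) \<in> R" shows " ev (LL R) \<beta> \<subseteq> LL R A"
proof
  fix v assume "v \<in> ev (LL R) \<beta>"
  then have "tval R \<beta> v" by (simp add: tval_ev)
  then have "tval R (NT A) v" using assms by (rule tNT[rotated])
  then show "v \<in> LL R A" by (simp add: LL_def)
qed

lemma ev_mono: "(\<And>X. S1 X \<subseteq> S2 X) \<Longrightarrow> ev S1 \<alpha> \<subseteq> ev S2 \<alpha>"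
  by (induction \<alpha>) fastforce+

lemma LL_least:
  assumes "\<And>X \<beta>. (X, \<beta>) \<in> R \<Longrightarrow> ev S \<beta> \<subseteq> S X"
  shows "LL R X \<subseteq> S X"
proof -
  have "tval R \<alpha> v \<Longrightarrow> v \<in> ev S \<alpha>" for \<alpha> v
    by (induction rule: tval.induct) (use assms in auto)
  then show ?thesis unfolding LL_def by force
qed

lemma ground_tval: "ground \<beta> \<Longrightarrow> tval R \<beta> (val \<beta>)"
  by (induction \<beta>) (auto simp: ground_def intro: tval.intros)

lemma rstep_tval: "rstep R \<alpha> \<alpha>' \<Longrightarrow> tval R \<alpha>' v \<Longrightarrow> tval R \<alpha> v"
  by (induction arbitrary: v rule: rstep.induct) (auto intro: tval.intros)

lemma rsteps_tval: "(rstep R)\<^sup>*\<^sup>* \<alpha> \<beta> \<Longrightarrow> ground \<beta> \<Longrightarrow> tval R \<alpha> (val \<beta>)"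
  by (induction rule: converse_rtranclp_induct) (auto intro: ground_tval rstep_tval)

lemma rsteps_catL: "(rstep R)\<^sup>*\<^sup>* a a' \<Longrightarrow> (rstep R)\<^sup>*\<^sup>* (Cat a b) (Cat a' b)"
  by (induction rule: rtranclp_induct) (auto intro: rtranclp.rtrancl_into_rtrancl rstep.intros)
lemma rsteps_catR: "(rstep R)\<^sup>*\<^sup>* b b' \<Longrightarrow> (rstep R)\<^sup>*\<^sup>* (Cat a b) (Cat a b')"
  by (induction rule: rtranclp_induct) (auto intro: rtranclp.rtrancl_into_rtrancl rstep.intros)
lemma rsteps_intcL: "(rstep R)\<^sup>*\<^sup>* a a' \<Longrightarrow> (rstep R)\<^sup>*\<^sup>* (Intc j a b) (Intc j a' b)"
  by (induction rule: rtranclp_induct) (auto intro: rtranclp.rtrancl_into_rtrancl rstep.intros)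
lemma rsteps_intcR: "(rstep R)\<^sup>*\<^sup>* b b' \<Longrightarrow> (rstep R)\<^sup>*\<^sup>* (Intc j a b) (Intc j a b')"
  by (induction rule: rtranclp_induct) (auto intro: rtranclp.rtrancl_into_rtrancl rstep.intros)

lemma tval_rsteps: "tval R \<alpha> v \<Longrightarrow> \<exists>\<beta>. (rstep R)\<^sup>*\<^sup>* \<alpha> \<beta> \<and> ground \<beta> \<and> val \<beta> = v"
proof (induction rule: tval.induct)
  case (tTup u)
  then show ?case by (intro exI[of _ "Tup u"]) (auto simp: ground_def)
next
  case (tNT A \<beta> v)
  then obtain \<gamma> where "(rstep R)\<^sup>*\<^sup>* \<beta> \<gamma>" "ground \<gamma>" "val \<gamma> = v" by blast
  moreover have "rstep R (NT A) \<beta>" using tNT by (auto intro: rstep.intros)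
  ultimately have "(rstep R)\<^sup>*\<^sup>* (NT A) \<gamma>" by (meson converse_rtranclp_into_rtranclp)
  then show ?case using \<open>ground \<gamma>\<close> \<open>val \<gamma> = v\<close> by blast
next
  case (tCat a x b y)
  then obtain a' b' where h: "(rstep R)\<^sup>*\<^sup>* a a'" "ground a'" "val a' = x"
    "(rstep R)\<^sup>*\<^sup>* b b'" "ground b'" "val b' = y" by blast
  have "(rstep R)\<^sup>*\<^sup>* (Cat a b) (Cat a' b')"
    using rtranclp_trans[OF rsteps_catL[OF h(1)] rsteps_catR[OF h(4)]] .
  then show ?case using h
    by (intro exI[of _ "Cat a' b'"]) (auto simp: ground_def)
next
  case (tIntc a x b y j)
  then obtain a' b' where h: "(rstep R)\<^sup>*\<^sup>* a a'" "ground a'" "val a' = x"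
    "(rstep R)\<^sup>*\<^sup>* b b'" "ground b'" "val b' = y" by blast
  have "(rstep R)\<^sup>*\<^sup>* (Intc j a b) (Intc j a' b')"
    using rtranclp_trans[OF rsteps_intcL[OF h(1)] rsteps_intcR[OF h(4)]] .
  moreover have "ground (Intc j a' b')" using h(2,5) by (simp add: ground_def)
  moreover have "val (Intc j a' b') = tup_intc j x y" using h(3,6) by simp
  ultimately show ?case by blast
qed

lemma LangNT_LL: "LangNT G A = LL (Rules G) A"
proof
  show "LangNT G A \<subseteq> LL (Rules G) A"
    unfolding LangNT_def LL_def derives_def using rsteps_tval by blast
  show "LL (Rules G) A \<subseteq> LangNT G A"
  proof
    fix v assume "v \<in> LL (Rules G) A"
    then obtain \<beta> where "(rstep (Rules G))\<^sup>*\<^sup>* (NT A) \<beta>" "ground \<beta>" "val \<beta> = v"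
      unfolding LL_def using tval_rsteps by blast
    then show "v \<in> LangNT G A" unfolding LangNT_def derives_def by blast
  qed
qed



lemma tup_cat_len: "x \<noteq> [] \<Longrightarrow> y \<noteq> [] \<Longrightarrow> length (tup_cat x y) = length x + length y - 1"
  by (cases y) (auto simp: tup_cat_def)

lemma tup_cat_nonempty: "tup_cat x y \<noteq> []"
  by (simp add: tup_cat_def)

lemma tup_len_cat: "x \<noteq> [] \<Longrightarrow> y \<noteq> [] \<Longrightarrow> tup_len (tup_cat x y) = tup_len x + tup_len y"
proof -
  assume "x \<noteq> []" "y \<noteq> []"
  then obtain x' a y' b where "x = x' @ [a]" "y = b # y'"
    by (metis append_butlast_last_id list.exhaust)
  then show ?thesis by (simp add: tup_cat_def tup_len_def)
qed

lemma tup_len_append: "tup_len (xs @ ys) = tup_len xs + tup_len ys"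
  by (simp add: tup_len_def)

lemma tup_intc_len: "1 \<le> j \<Longrightarrow> j < length x \<Longrightarrow> y \<noteq> [] \<Longrightarrow>
   length (tup_intc j x y) = length x + length y - 2"
proof -
  assume a: "1 \<le> j" "j < length x" "y \<noteq> []"
  then have "take j x \<noteq> []" "drop j x \<noteq> []" by auto
  then show ?thesis using a unfolding tup_intc_def
    by (simp add: tup_cat_len tup_cat_nonempty)
qed

lemma tup_len_intc: "1 \<le> j \<Longrightarrow> j < length x \<Longrightarrow> y \<noteq> [] \<Longrightarrow>
   tup_len (tup_intc j x y) = tup_len x + tup_len y"
proof -
  assume a: "1 \<le> j" "j < length x" "y \<noteq> []"
  have "tup_len x = tup_len (take j x) + tup_len (drop j x)"
    by (metis append_take_drop_id tup_len_append)
  moreover have "take j x \<noteq> []" "drop j x \<noteq> []" using a by auto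
  ultimately show ?thesis using a unfolding tup_intc_def
    by (simp add: tup_len_cat tup_cat_nonempty)
qed

lemma tup_intc_split:
  assumes "length P = g - 1" "1 \<le> g" "u \<noteq> []"
  shows "tup_intc g (P @ p # q # Q) u = P @ tup_cat (tup_cat [p] u) [q] @ Q"
proof -
  have t: "take g (P @ p # q # Q) = P @ [p]" using assms
    by (simp add: take_Cons')
  have d: "drop g (P @ p # q # Q) = q # Q" using assms
    by (simp add: drop_Cons')
  obtain u0 us where u: "u = u0 # us" using assms by (cases u) auto
  show ?thesis unfolding tup_intc_def t d u
    by (simp add: tup_cat_def butlast_append)
qed

lemma split3: "1 \<le> g \<Longrightarrow> g < length y \<Longrightarrow> y = take (g-1) y @ y!(g-1) # y!g # drop (g+1) y"
proof -
  assume a: "1 \<le> g" "g < length y"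
  have d1: "drop (g-1) y = y!(g-1) # drop (Suc (g-1)) y" using a
    by (intro Cons_nth_drop_Suc[symmetric]) simp
  have d2: "drop g y = y!g # drop (g+1) y" using a
    by (simp add: Cons_nth_drop_Suc)
  have "Suc (g-1) = g" using a by simp
  then have d: "drop (g-1) y = y!(g-1) # y!g # drop (g+1) y" using d1 d2 by simp
  have "y = take (g-1) y @ drop (g-1) y" by simp
  also have "\<dots> = take (g-1) y @ y!(g-1) # y!g # drop (g+1) y" by (simp only: d)
  finally show ?thesis .
qed

section \<open>Elementary operations\<close>

datatype 'a eop = OL "'a tuple" | OR "'a tuple" | OI nat "'a tuple"

fun apply_op :: "'a eop \<Rightarrow> 'a tuple \<Rightarrow> 'a tuple" where
  "apply_op (OL u) w = tup_cat u w"
| "apply_op (OR u) w = tup_cat w u"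
| "apply_op (OI j u) w = tup_intc j w u"

fun apply_ops :: "'a eop list \<Rightarrow> 'a tuple \<Rightarrow> 'a tuple" where
  "apply_ops [] w = w"
| "apply_ops (e # os) w = apply_ops os (apply_op e w)"

lemma apply_ops_append[simp]: "apply_ops (xs @ ys) w = apply_ops ys (apply_ops xs w)"
  by (induction xs arbitrary: w) auto

fun op_rk :: "nat \<Rightarrow> 'a eop \<Rightarrow> nat" where
  "op_rk r (OL u) = r + tup_rank u"
| "op_rk r (OR u) = r + tup_rank u"
| "op_rk r (OI j u) = r + tup_rank u - 1"

fun ops_rank :: "nat \<Rightarrow> 'a eop list \<Rightarrow> nat" where
  "ops_rank r [] = r"
| "ops_rank r (e # os) = ops_rank (op_rk r e) os"

lemma ops_rank_append[simp]: "ops_rank r (xs @ ys) = ops_rank (ops_rank r xs) ys"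
  by (induction xs arbitrary: r) auto

fun op_ok :: "nat \<Rightarrow> nat \<Rightarrow> 'a eop \<Rightarrow> bool" where
  "op_ok k r (OL u) = (u \<noteq> [] \<and> u \<noteq> eps_tup \<and> tup_len u \<le> 1 \<and> tup_rank u + r \<le> k)"
| "op_ok k r (OR u) = (u \<noteq> [] \<and> u \<noteq> eps_tup \<and> tup_len u \<le> 1 \<and> tup_rank u + r \<le> k)"
| "op_ok k r (OI j u) = (u \<noteq> [] \<and> tup_len u \<le> 1 \<and> 1 \<le> j \<and> j \<le> k \<and> j \<le> r \<and> r + tup_rank u \<le> k + 1)"

fun ops_ok :: "nat \<Rightarrow> nat \<Rightarrow> 'a eop list \<Rightarrow> bool" where
  "ops_ok k r [] = (r \<le> k)"
| "ops_ok k r (e # os) = (r \<le> k \<and> op_ok k r e \<and> ops_ok k (op_rk r e) os)"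

lemma ops_ok_le: "ops_ok k r os \<Longrightarrow> r \<le> k"
  by (cases os) auto

lemma ops_ok_append: "ops_ok k r (xs @ ys) \<longleftrightarrow> ops_ok k r xs \<and> ops_ok k (ops_rank r xs) ys"
  by (induction xs arbitrary: r) (auto dest: ops_ok_le)

lemma apply_op_props:
  assumes "op_ok k r e" "length w = r + 1"
  shows "length (apply_op e w) = op_rk r e + 1 \<and> tup_len w \<le> tup_len (apply_op e w)"
proof -
  have w: "w \<noteq> []" using assms by auto
  show ?thesis
  proof (cases e)
    case (OL u)
    then show ?thesis using assms w by (auto simp: tup_cat_len tup_len_cat tup_rank_def)
  next
    case (OR u)
    then show ?thesis using assms w by (auto simp: tup_cat_len tup_len_cat tup_rank_def)
  next
    case (OI j u)
    then have "u \<noteq> []" "1 \<le> j" "j < length w" using assms by auto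
    then have "length u \<ge> 1" by (cases u) auto
    then show ?thesis using OI assms w by (auto simp: tup_intc_len tup_len_intc tup_rank_def)
  qed
qed

lemma apply_ops_props:
  "ops_ok k r os \<Longrightarrow> length w = r + 1 \<Longrightarrow>
   length (apply_ops os w) = ops_rank r os + 1 \<and> tup_len w \<le> tup_len (apply_ops os w)"
proof (induction os arbitrary: r w)
  case Nil
  then show ?case by simp
next
  case (Cons e os)
  then have "op_ok k r e" "ops_ok k (op_rk r e) os" by auto
  from apply_op_props[OF this(1) Cons.prems(2)]
  have "length (apply_op e w) = op_rk r e + 1" "tup_len w \<le> tup_len (apply_op e w)" by auto
  with Cons.IH[OF \<open>ops_ok k (op_rk r e) os\<close> this(1)] show ?case by auto
qed

fun appT :: "'a tuple \<Rightarrow> 'a eop list" where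
  "appT [] = []"
| "appT [x] = map (\<lambda>a. OR [[a]]) x"
| "appT (x # y # ys) = map (\<lambda>a. OR [[a]]) x @ OR [[],[]] # appT (y # ys)"

fun prepT :: "'a tuple \<Rightarrow> 'a eop list" where
  "prepT [] = []"
| "prepT [x] = map (\<lambda>a. OL [[a]]) (rev x)"
| "prepT (x # y # ys) = prepT (y # ys) @ OL [[],[]] # map (\<lambda>a. OL [[a]]) (rev x)"

fun replT :: "nat \<Rightarrow> 'a tuple \<Rightarrow> 'a eop list" where
  "replT g [] = []"
| "replT g [x] = map (\<lambda>a. OI g [[a],[]]) x @ [OI g [[]]]"
| "replT g [x, y] = map (\<lambda>a. OI g [[a],[]]) x @ map (\<lambda>b. OI g [[],[b]]) (rev y)"
| "replT g (x # y # z # zs) = map (\<lambda>a. OI g [[a],[]]) x @ OI g [[],[],[]] # replT (Suc g) (y # z # zs)"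

lemma app_map: "w \<noteq> [] \<Longrightarrow> apply_ops (map (\<lambda>a. OR [[a]]) s) w = butlast w @ [last w @ s]"
proof (induction s arbitrary: w)
  case Nil
  then show ?case by simp
next
  case (Cons a s)
  have "apply_op (OR [[a]]) w = butlast w @ [last w @ [a]]" by (simp add: tup_cat_def)
  then show ?case using Cons.IH[of "butlast w @ [last w @ [a]]"] by simp
qed

lemma appT_correct: "w \<noteq> [] \<Longrightarrow> x \<noteq> [] \<Longrightarrow> apply_ops (appT x) w = tup_cat w x"
proof (induction x arbitrary: w rule: appT.induct)
  case 1 then show ?case by simp
next
  case (2 x) then show ?case by (simp add: app_map tup_cat_def)
next
  case (3 x y ys)
  define w1 where "w1 = butlast w @ [last w @ x]"
  have e1: "apply_ops (map (\<lambda>a. OR [[a]]) x) w = w1" using 3 by (simp add: app_map w1_def)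
  have e2: "tup_cat w1 [[],[]] = w1 @ [[]]" by (simp add: tup_cat_def w1_def)
  have "apply_ops (appT (x # y # ys)) w = apply_ops (appT (y # ys)) (w1 @ [[]])"
    by (simp add: e1 e2)
  also have "\<dots> = tup_cat (w1 @ [[]]) (y # ys)" using 3 by simp
  also have "\<dots> = tup_cat w (x # y # ys)" by (simp add: tup_cat_def w1_def butlast_append)
  finally show ?case .
qed

lemma prep_map: "w \<noteq> [] \<Longrightarrow> apply_ops (map (\<lambda>a. OL [[a]]) (rev s)) w = (s @ hd w) # tl w"
proof (induction s arbitrary: w)
  case Nil
  then show ?case by simp
next
  case (Cons a s)
  then show ?case by (simp add: tup_cat_def)
qed

lemma prepT_correct: "w \<noteq> [] \<Longrightarrow> x \<noteq> [] \<Longrightarrow> apply_ops (prepT x) w = tup_cat x w"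
proof (induction x arbitrary: w rule: prepT.induct)
  case 1 then show ?case by simp
next
  case (2 x) then show ?case by (simp add: prep_map tup_cat_def)
next
  case (3 x y ys)
  let ?v = "tup_cat (y # ys) w"
  have "apply_op (OL [[],[]]) ?v = [] # ?v" by (simp add: tup_cat_def)
  then have "apply_ops (prepT (x # y # ys)) w = x # ?v"
    using 3 by (simp add: prep_map tup_cat_nonempty)
  then show ?case by (simp add: tup_cat_def)
qed

lemma tc1: "v \<noteq> [] \<Longrightarrow> tup_cat [[]] v = v"
  by (cases v) (auto simp: tup_cat_def)
lemma tc2: "tup_cat [p] (x # V) = (p @ x) # V"
  by (simp add: tup_cat_def)
lemma tc3: "V \<noteq> [] \<Longrightarrow> tup_cat (a # V) [q] = a # tup_cat V [q]"
  by (simp add: tup_cat_def)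

lemma repl_map1: "length P = g - 1 \<Longrightarrow> 1 \<le> g \<Longrightarrow>
  apply_ops (map (\<lambda>a. OI g [[a],[]]) s) (P @ p # q # Q) = P @ (p @ s) # q # Q"
proof (induction s arbitrary: p)
  case Nil
  then show ?case by simp
next
  case (Cons a s)
  have "apply_op (OI g [[a],[]]) (P @ p # q # Q) = P @ (p @ [a]) # q # Q"
    using Cons.prems by (simp add: tup_intc_split tup_cat_def)
  then show ?case using Cons by simp
qed

lemma repl_map2: "length P = g - 1 \<Longrightarrow> 1 \<le> g \<Longrightarrow>
  apply_ops (map (\<lambda>b. OI g [[],[b]]) (rev s)) (P @ p # q # Q) = P @ p # (s @ q) # Q"
proof (induction s arbitrary: q)
  case Nil
  then show ?case by simp
next
  case (Cons a s)
  have "apply_op (OI g [[],[a]]) (P @ p # (s @ q) # Q) = P @ p # (a # s @ q) # Q"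
    using Cons.prems by (simp add: tup_intc_split tup_cat_def)
  then show ?case using Cons by simp
qed

lemma replT_split: "length P = g - 1 \<Longrightarrow> 1 \<le> g \<Longrightarrow> x \<noteq> [] \<Longrightarrow>
  apply_ops (replT g x) (P @ p # q # Q) = tup_intc g (P @ p # q # Q) x"
proof (induction g x arbitrary: P p q rule: replT.induct)
  case (1 g) then show ?case by simp
next
  case (2 g x)
  have "apply_op (OI g [[]]) (P @ (p @ x) # q # Q) = P @ (p @ x @ q) # Q"
    using 2 by (simp add: tup_intc_split tup_cat_def)
  then show ?case using 2 by (simp add: repl_map1 tup_intc_split tup_cat_def)
next
  case (3 g x y)
  then show ?case by (simp add: repl_map1 repl_map2 tup_intc_split tup_cat_def)
next
  case (4 g x y z zs)
  have a: "apply_op (OI g [[],[],[]]) (P @ (p @ x) # q # Q) = (P @ [p @ x]) @ [] # q # Q"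
    using 4 by (simp add: tup_intc_split tup_cat_def)
  have "apply_ops (replT g (x # y # z # zs)) (P @ p # q # Q)
      = apply_ops (replT (Suc g) (y # z # zs)) ((P @ [p @ x]) @ [] # q # Q)"
    using 4 a by (simp add: repl_map1)
  also have "\<dots> = tup_intc (Suc g) ((P @ [p @ x]) @ [] # q # Q) (y # z # zs)"
    using 4 by (intro "4.IH") auto
  also have "\<dots> = (P @ [p @ x]) @ tup_cat (tup_cat [[]] (y # z # zs)) [q] @ Q"
    using 4 by (intro tup_intc_split) auto
  also have "\<dots> = P @ tup_cat (tup_cat [p] (x # y # z # zs)) [q] @ Q"
    by (simp add: tc1 tc2 tc3)
  also have "\<dots> = tup_intc g (P @ p # q # Q) (x # y # z # zs)"
    using 4 by (intro tup_intc_split[symmetric]) auto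
  finally show ?case .
qed

lemma replT_correct: "1 \<le> g \<Longrightarrow> g < length w \<Longrightarrow> x \<noteq> [] \<Longrightarrow>
  apply_ops (replT g x) w = tup_intc g w x"
proof -
  assume a: "1 \<le> g" "g < length w" "x \<noteq> []"
  define P where "P = take (g-1) w"
  have l: "length P = g - 1" using a by (simp add: P_def)
  have w: "w = P @ w!(g-1) # w!g # drop (g+1) w" using split3[OF a(1,2)] by (simp add: P_def)
  show ?thesis using replT_split[OF l a(1) a(3), of "w!(g-1)" "w!g" "drop (g+1) w"] w by simp
qed



section \<open>Linear terms as operation lists\<close>

fun subst :: "('a, 'n) tm \<Rightarrow> 'a tuple \<Rightarrow> ('a, 'n) tm" where
  "subst (Tup u) w = Tup u"
| "subst (NT A) w = Tup w"
| "subst (Cat a b) w = Cat (subst a w) (subst b w)"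
| "subst (Intc j a b) w = Intc j (subst a w) (subst b w)"

lemma subst_ground: "nts \<alpha> = [] \<Longrightarrow> subst \<alpha> w = \<alpha>"
  by (induction \<alpha>) auto

fun ops :: "('a, 'n) tm \<Rightarrow> 'a eop list" where
  "ops (Tup u) = []"
| "ops (NT A) = []"
| "ops (Cat a b) = (if nts a \<noteq> [] then ops a @ appT (val b) else ops b @ prepT (val a))"
| "ops (Intc j a b) = (if nts a \<noteq> [] then ops a @ replT j (val b)
     else ops b @ prepT (take j (val a)) @ appT (drop j (val a)))"

lemma len_val_subst:
  "kcorrect k rkf \<alpha> \<Longrightarrow> (\<forall>B\<in>set (nts \<alpha>). length w = rkf B + 1) \<Longrightarrow>
   length (val (subst \<alpha> w)) = tm_rank rkf \<alpha> + 1"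
proof (induction \<alpha>)
  case (Tup u)
  then show ?case by (simp add: tup_rank_def)
next
  case (NT A)
  then show ?case by simp
next
  case (Cat a b)
  then have "length (val (subst a w)) = tm_rank rkf a + 1" "length (val (subst b w)) = tm_rank rkf b + 1"
    by auto
  moreover from this have "val (subst a w) \<noteq> []" "val (subst b w) \<noteq> []" by auto
  ultimately show ?case by (simp add: tup_cat_len)
next
  case (Intc j a b)
  then have "length (val (subst a w)) = tm_rank rkf a + 1" "length (val (subst b w)) = tm_rank rkf b + 1"
    "1 \<le> j" "j \<le> tm_rank rkf a"
    by auto
  moreover from this have "val (subst a w) \<noteq> []" "val (subst b w) \<noteq> []" by auto
  ultimately show ?case by (simp add: tup_intc_len)
qed

lemma len_val_ground:
  "kcorrect k rkf \<alpha> \<Longrightarrow> nts \<alpha> = [] \<Longrightarrow> length (val \<alpha>) = tm_rank rkf \<alpha> + 1"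
  using len_val_subst[of k rkf \<alpha> "[]"] by (simp add: subst_ground)

lemma appT_ok: "x \<noteq> [] \<Longrightarrow> r + tup_rank x \<le> k \<Longrightarrow>
   ops_ok k r (appT x) \<and> ops_rank r (appT x) = r + tup_rank x"
proof (induction x arbitrary: r rule: appT.induct)
  case 1 then show ?case by simp
next
  case (2 x)
  have "ops_ok k r (map (\<lambda>a. OR [[a]]) s) \<and> ops_rank r (map (\<lambda>a. OR [[a]]) s) = r" if "r \<le> k" for s r
    using that by (induction s) (auto simp: tup_rank_def tup_len_def eps_tup_def)
  then show ?case using 2 by (simp add: tup_rank_def)
next
  case (3 x y ys)
  have m: "ops_ok k r (map (\<lambda>a. OR [[a]]) s) \<and> ops_rank r (map (\<lambda>a. OR [[a]]) s) = r" if "r \<le> k" for s r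
    using that by (induction s) (auto simp: tup_rank_def tup_len_def eps_tup_def)
  have "ops_ok k (Suc r) (appT (y # ys)) \<and> ops_rank (Suc r) (appT (y # ys)) = Suc r + tup_rank (y # ys)"
    using 3 by (intro "3.IH") (auto simp: tup_rank_def)
  then show ?case using 3 m[of r x]
    by (auto simp: ops_ok_append tup_rank_def tup_len_def eps_tup_def)
qed

lemma prepT_ok: "x \<noteq> [] \<Longrightarrow> r + tup_rank x \<le> k \<Longrightarrow>
   ops_ok k r (prepT x) \<and> ops_rank r (prepT x) = r + tup_rank x"
proof (induction x arbitrary: r rule: prepT.induct)
  case 1 then show ?case by simp
next
  case (2 x)
  have "ops_ok k r (map (\<lambda>a. OL [[a]]) s) \<and> ops_rank r (map (\<lambda>a. OL [[a]]) s) = r" if "r \<le> k" for s r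
    using that by (induction s) (auto simp: tup_rank_def tup_len_def eps_tup_def)
  then show ?case using 2 by (simp add: tup_rank_def)
next
  case (3 x y ys)
  have m: "ops_ok k r (map (\<lambda>a. OL [[a]]) s) \<and> ops_rank r (map (\<lambda>a. OL [[a]]) s) = r" if "r \<le> k" for s r
    using that by (induction s) (auto simp: tup_rank_def tup_len_def eps_tup_def)
  have "ops_ok k r (prepT (y # ys)) \<and> ops_rank r (prepT (y # ys)) = r + tup_rank (y # ys)"
    using 3 by (intro "3.IH") (auto simp: tup_rank_def)
  then show ?case using 3 m[of "Suc (r + length ys)" "rev x"]
    by (auto simp: ops_ok_append tup_rank_def tup_len_def eps_tup_def)
qed

lemma replT_ok: "x \<noteq> [] \<Longrightarrow> 1 \<le> g \<Longrightarrow> g \<le> r \<Longrightarrow> r \<le> k \<Longrightarrow> r + tup_rank x \<le> k + 1 \<Longrightarrow>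
   ops_ok k r (replT g x) \<and> ops_rank r (replT g x) = r + tup_rank x - 1"
proof (induction g x arbitrary: r rule: replT.induct)
  case (1 g) then show ?case by simp
next
  case (2 g x)
  have m: "ops_ok k r (map (\<lambda>a. OI g [[a],[]]) s @ [OI g [[]]]) \<and>
           ops_rank r (map (\<lambda>a. OI g [[a],[]]) s @ [OI g [[]]]) = r - 1" for s
    using 2 by (induction s) (auto simp: tup_rank_def tup_len_def)
  then show ?case using 2 by (simp add: tup_rank_def)
next
  case (3 g x y)
  have m1: "ops_ok k r (map (\<lambda>a. OI g [[a],[]]) s) \<and> ops_rank r (map (\<lambda>a. OI g [[a],[]]) s) = r" for s
    using 3 by (induction s) (auto simp: tup_rank_def tup_len_def)
  have m2: "ops_ok k r (map (\<lambda>a. OI g [[],[a]]) s) \<and> ops_rank r (map (\<lambda>a. OI g [[],[a]]) s) = r" for s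
    using 3 by (induction s) (auto simp: tup_rank_def tup_len_def)
  show ?case using m1[of x] m2[of "rev y"] by (simp add: ops_ok_append tup_rank_def)
next
  case (4 g x y z zs)
  have m1: "ops_ok k r (map (\<lambda>a. OI g [[a],[]]) s) \<and> ops_rank r (map (\<lambda>a. OI g [[a],[]]) s) = r" for s
    using 4 by (induction s) (auto simp: tup_rank_def tup_len_def)
  have "ops_ok k (Suc r) (replT (Suc g) (y # z # zs)) \<and>
     ops_rank (Suc r) (replT (Suc g) (y # z # zs)) = Suc r + tup_rank (y # z # zs) - 1"
    using 4 by (intro "4.IH") (auto simp: tup_rank_def)
  then show ?case using m1[of x] 4 by (auto simp: ops_ok_append tup_rank_def tup_len_def)
qed

lemma ops_correct:
  assumes "kcorrect k rkf \<alpha>" "nts \<alpha> = [B]" "length w = rkf B + 1"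
  shows "apply_ops (ops \<alpha>) w = val (subst \<alpha> w) \<and> ops_ok k (rkf B) (ops \<alpha>) \<and>
         ops_rank (rkf B) (ops \<alpha>) = tm_rank rkf \<alpha>"
  using assms
proof (induction \<alpha>)
  case (Tup u)
  then show ?case by simp
next
  case (NT A)
  then show ?case by simp
next
  case (Cat a b)
  show ?case
  proof (cases "nts a")
    case Nil
    with Cat.prems have nb: "nts b = [B]" by simp
    have ka: "kcorrect k rkf a" and kb: "kcorrect k rkf b" and s: "tm_rank rkf a + tm_rank rkf b \<le> k"
      using Cat.prems by auto
    from Cat.IH(2)[OF kb nb Cat.prems(3)] have IH: "apply_ops (ops b) w = val (subst b w)"
      "ops_ok k (rkf B) (ops b)" "ops_rank (rkf B) (ops b) = tm_rank rkf b" by auto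
    have la: "length (val a) = tm_rank rkf a + 1" using len_val_ground[OF ka Nil] .
    have lb: "length (val (subst b w)) = tm_rank rkf b + 1"
      using len_val_subst[OF kb] nb Cat.prems(3) by simp
    have P: "ops_ok k (tm_rank rkf b) (prepT (val a)) \<and> ops_rank (tm_rank rkf b) (prepT (val a)) = tm_rank rkf b + tup_rank (val a)"
      using la s by (intro prepT_ok) (auto simp: tup_rank_def)
    have ne: "val a \<noteq> []" "val (subst b w) \<noteq> []" using la lb by auto
    then show ?thesis using Nil IH la lb prepT_correct[OF ne(2) ne(1)] P
      by (auto simp: ops_ok_append subst_ground tup_rank_def)
  next
    case (Cons B' l)
    with Cat.prems have na: "nts a = [B]" and nb: "nts b = []" by auto
    have ka: "kcorrect k rkf a" and kb: "kcorrect k rkf b" and s: "tm_rank rkf a + tm_rank rkf b \<le> k"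
      using Cat.prems by auto
    from Cat.IH(1)[OF ka na Cat.prems(3)] have IH: "apply_ops (ops a) w = val (subst a w)"
      "ops_ok k (rkf B) (ops a)" "ops_rank (rkf B) (ops a) = tm_rank rkf a" by auto
    have lb: "length (val b) = tm_rank rkf b + 1" using len_val_ground[OF kb nb] .
    have la: "length (val (subst a w)) = tm_rank rkf a + 1"
      using len_val_subst[OF ka] na Cat.prems(3) by simp
    have P: "ops_ok k (tm_rank rkf a) (appT (val b)) \<and> ops_rank (tm_rank rkf a) (appT (val b)) = tm_rank rkf a + tup_rank (val b)"
      using lb s by (intro appT_ok) (auto simp: tup_rank_def)
    have ne: "val b \<noteq> []" "val (subst a w) \<noteq> []" using la lb by auto
    then show ?thesis using na nb IH la lb appT_correct[OF ne(2) ne(1)] P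
      by (auto simp: ops_ok_append subst_ground tup_rank_def)
  qed
next
  case (Intc j a b)
  have ka: "kcorrect k rkf a" and kb: "kcorrect k rkf b" and s: "tm_rank rkf a + tm_rank rkf b \<le> k + 1"
    and j: "1 \<le> j" "j \<le> k" "j \<le> tm_rank rkf a"
    using Intc.prems by auto
  show ?case
  proof (cases "nts a")
    case Nil
    with Intc.prems have nb: "nts b = [B]" by simp
    from Intc.IH(2)[OF kb nb Intc.prems(3)] have IH: "apply_ops (ops b) w = val (subst b w)"
      "ops_ok k (rkf B) (ops b)" "ops_rank (rkf B) (ops b) = tm_rank rkf b" by auto
    have la: "length (val a) = tm_rank rkf a + 1" using len_val_ground[OF ka Nil] .
    have lb: "length (val (subst b w)) = tm_rank rkf b + 1"
      using len_val_subst[OF kb] nb Intc.prems(3) by simp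
    have t: "take j (val a) \<noteq> []" "length (take j (val a)) = j" using la j by auto
    have d: "drop j (val a) \<noteq> []" "length (drop j (val a)) = tm_rank rkf a + 1 - j" using la j by auto
    have p: "ops_ok k (tm_rank rkf b) (prepT (take j (val a))) \<and>
       ops_rank (tm_rank rkf b) (prepT (take j (val a))) = tm_rank rkf b + (j - 1)"
      using prepT_ok[of "take j (val a)" "tm_rank rkf b" k] t s j by (simp add: tup_rank_def)
    have q: "ops_ok k (tm_rank rkf b + (j - 1)) (appT (drop j (val a))) \<and>
       ops_rank (tm_rank rkf b + (j - 1)) (appT (drop j (val a))) = tm_rank rkf b + (j - 1) + (tm_rank rkf a - j)"
      using appT_ok[of "drop j (val a)" "tm_rank rkf b + (j - 1)" k] d s j by (simp add: tup_rank_def)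
    have v: "val (subst (Intc j a b) w) = tup_cat (tup_cat (take j (val a)) (val (subst b w))) (drop j (val a))"
      using Nil by (simp add: subst_ground tup_intc_def)
    have ny: "val (subst b w) \<noteq> []" using lb by auto
    have "apply_ops (ops (Intc j a b)) w =
       apply_ops (appT (drop j (val a))) (apply_ops (prepT (take j (val a))) (val (subst b w)))"
      using Nil IH by simp
    also have "\<dots> = apply_ops (appT (drop j (val a))) (tup_cat (take j (val a)) (val (subst b w)))"
      using prepT_correct[OF ny t(1)] by simp
    also have "\<dots> = tup_cat (tup_cat (take j (val a)) (val (subst b w))) (drop j (val a))"
      using appT_correct[OF tup_cat_nonempty d(1)] by simp
    finally have "apply_ops (ops (Intc j a b)) w = val (subst (Intc j a b) w)" using v by simp
    moreover have "ops_ok k (rkf B) (ops (Intc j a b))" using Nil IH p q by (simp add: ops_ok_append)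
    moreover have "ops_rank (rkf B) (ops (Intc j a b)) = tm_rank rkf (Intc j a b)"
      using Nil IH p q j by simp
    ultimately show ?thesis by blast
  next
    case (Cons B' l)
    with Intc.prems have na: "nts a = [B]" and nb: "nts b = []" by auto
    from Intc.IH(1)[OF ka na Intc.prems(3)] have IH: "apply_ops (ops a) w = val (subst a w)"
      "ops_ok k (rkf B) (ops a)" "ops_rank (rkf B) (ops a) = tm_rank rkf a" by auto
    have lb: "length (val b) = tm_rank rkf b + 1" using len_val_ground[OF kb nb] .
    have la: "length (val (subst a w)) = tm_rank rkf a + 1"
      using len_val_subst[OF ka] na Intc.prems(3) by simp
    have rkf: "tm_rank rkf a \<le> k" using ka by (cases a) auto
    have "ops_ok k (tm_rank rkf a) (replT j (val b)) \<and> ops_rank (tm_rank rkf a) (replT j (val b)) = tm_rank rkf a + tup_rank (val b) - 1"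
      using lb s j rkf by (intro replT_ok) (auto simp: tup_rank_def)
    moreover have "val b \<noteq> []" using lb by auto
    ultimately show ?thesis using na nb IH la lb j
      by (auto simp: ops_ok_append replT_correct subst_ground tup_rank_def)
  qed
qed

section \<open>Building a ground tuple from one letter\<close>

fun gdec :: "'a tuple \<Rightarrow> 'a \<times> 'a eop list" where
  "gdec [] = (undefined, [])"
| "gdec (x # xs) = (if x \<noteq> [] then (hd x, appT (tl x # xs))
     else (fst (gdec xs), snd (gdec xs) @ [OL [[],[]]]))"

lemma gdec_correct:
  "tup_len v \<noteq> 0 \<Longrightarrow> length v \<le> k + 1 \<Longrightarrow>
   apply_ops (snd (gdec v)) [[fst (gdec v)]] = v \<and> ops_ok k 0 (snd (gdec v)) \<and>
   ops_rank 0 (snd (gdec v)) = length v - 1"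
proof (induction v)
  case Nil
  then show ?case by (simp add: tup_len_def)
next
  case (Cons x xs)
  show ?case
  proof (cases "x = []")
    case False
    have "ops_ok k 0 (appT (tl x # xs)) \<and> ops_rank 0 (appT (tl x # xs)) = 0 + tup_rank (tl x # xs)"
      using Cons.prems by (intro appT_ok) (auto simp: tup_rank_def)
    moreover have "apply_ops (appT (tl x # xs)) [[hd x]] = x # xs"
      using False by (simp add: appT_correct tup_cat_def)
    ultimately show ?thesis using False by (simp add: tup_rank_def)
  next
    case True
    then have xs: "tup_len xs \<noteq> 0" "length xs \<le> k + 1" using Cons.prems by (auto simp: tup_len_def)
    then have ne: "xs \<noteq> []" by (auto simp: tup_len_def)
    from Cons.IH[OF xs] have IH: "apply_ops (snd (gdec xs)) [[fst (gdec xs)]] = xs"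
      "ops_ok k 0 (snd (gdec xs))" "ops_rank 0 (snd (gdec xs)) = length xs - 1" by auto
    have "tup_cat [[],[]] xs = [] # xs" using ne by (cases xs) (auto simp: tup_cat_def)
    then show ?thesis using True IH ne Cons.prems
      by (auto simp: ops_ok_append tup_rank_def tup_len_def eps_tup_def)
  qed
qed



lemma ev_ground: "nts \<alpha> = [] \<Longrightarrow> ev S \<alpha> = {val \<alpha>}"
  by (induction \<alpha>) auto

lemma ev_lin: "nts \<alpha> = [B] \<Longrightarrow> ev S \<alpha> = (\<lambda>w. val (subst \<alpha> w)) ` S B"
proof (induction \<alpha>)
  case (Tup x)
  then show ?case by simp
next
  case (NT x)
  then show ?case by simp
next
  case (Cat a b)
  then consider "nts a = [B]" "nts b = []" | "nts a = []" "nts b = [B]"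
    by (cases "nts a") auto
  then show ?case
  proof cases
    case 1
    then show ?thesis using Cat by (auto simp: ev_ground subst_ground)
  next
    case 2
    then show ?thesis using Cat by (auto simp: ev_ground subst_ground)
  qed
next
  case (Intc j a b)
  then consider "nts a = [B]" "nts b = []" | "nts a = []" "nts b = [B]"
    by (cases "nts a") auto
  then show ?case
  proof cases
    case 1
    then show ?thesis using Intc by (auto simp: ev_ground subst_ground)
  next
    case 2
    then show ?thesis using Intc by (auto simp: ev_ground subst_ground)
  qed
qed

lemma kcorrect_rank: "kcorrect k rkf \<alpha> \<Longrightarrow> tm_rank rkf \<alpha> \<le> k"
  by (cases \<alpha>) (auto simp: tup_rank_def)

datatype ('a, 'n) bse = BT 'n | BL 'a
datatype ('a, 'n) nt2 = Top 'n | Ch "('a, 'n) bse" "'a eop list" | St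

fun chain_ok :: "('a, 'n) bse \<Rightarrow> 'a eop list \<Rightarrow> bool" where
  "chain_ok (BT B) os = (os \<noteq> [])"
| "chain_ok (BL a) os = True"

fun chnt :: "('a, 'n) bse \<Rightarrow> 'a eop list \<Rightarrow> ('a, 'n) nt2" where
  "chnt (BT B) os = (if os = [] then Top B else Ch (BT B) os)"
| "chnt (BL a) os = Ch (BL a) os"

fun opterm :: "'a eop \<Rightarrow> ('a, 'm) tm \<Rightarrow> ('a, 'm) tm" where
  "opterm (OL u) t = Cat (Tup u) t"
| "opterm (OR u) t = Cat t (Tup u)"
| "opterm (OI j u) t = Intc j t (Tup u)"

lemma ev_opterm: "ev S (opterm e t) = apply_op e ` ev S t"
  by (cases e) auto

definition prodrhs :: "('a, 'n) bse \<Rightarrow> 'a eop list \<Rightarrow> ('a, ('a, 'n) nt2) tm" where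
  "prodrhs b os = (if os = [] then (case b of BL a \<Rightarrow> Tup [[a]] | BT B \<Rightarrow> NT (Top B))
     else opterm (last os) (NT (chnt b (butlast os))))"

lemma ev_prodrhs_cons: "os \<noteq> [] \<Longrightarrow> ev S (prodrhs b os) = apply_op (last os) ` S (chnt b (butlast os))"
  by (simp add: prodrhs_def ev_opterm)

lemma apply_ops_snoc: "os \<noteq> [] \<Longrightarrow> apply_ops os w = apply_op (last os) (apply_ops (butlast os) w)"
  by (metis append_butlast_last_id apply_ops.simps apply_ops_append)

locale lin =
  fixes k :: nat and G :: "('a, 'n) dcfg"
  assumes wf: "is_kDCFG k G" and lin: "linear_dcfg G"
begin

abbreviation "RR \<equiv> Rules G"
abbreviation "NN \<equiv> NTs G"
abbreviation "rkG \<equiv> rk G"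
abbreviation "SS \<equiv> Start G"

lemma rule_wf: "(A, \<alpha>) \<in> RR \<Longrightarrow> A \<in> NN \<and> set (nts \<alpha>) \<subseteq> NN \<and> kcorrect k rkG \<alpha> \<and>
   tm_rank rkG \<alpha> = rkG A \<and> (\<forall>u \<in> set (leaf_tuples \<alpha>). tup_len u \<le> 1)"
  using wf unfolding is_kDCFG_def by blast

lemma rule_lin: "(A, \<alpha>) \<in> RR \<Longrightarrow> nts \<alpha> = [] \<or> nts \<alpha> = [hd (nts \<alpha>)]"
  using lin unfolding linear_dcfg_def linear_tm_def
  by (cases "nts \<alpha>") auto

definition L :: "'n \<Rightarrow> 'a tuple set" where "L A = LL RR A"
definition Lp :: "'n \<Rightarrow> 'a tuple set" where "Lp A = {v \<in> L A. tup_len v \<noteq> 0}"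

lemma L_len_gen: "tval RR \<alpha> v \<Longrightarrow> kcorrect k rkG \<alpha> \<Longrightarrow> length v = tm_rank rkG \<alpha> + 1"
proof (induction rule: tval.induct)
  case (tTup u)
  then show ?case by (simp add: tup_rank_def)
next
  case (tNT A \<beta> v)
  then show ?case using rule_wf[OF tNT(1)] by simp
next
  case (tCat a x b y)
  then have "length x = tm_rank rkG a + 1" "length y = tm_rank rkG b + 1" by auto
  moreover from this have "x \<noteq> []" "y \<noteq> []" by auto
  ultimately show ?case by (simp add: tup_cat_len)
next
  case (tIntc a x b y j)
  then have "length x = tm_rank rkG a + 1" "length y = tm_rank rkG b + 1" "1 \<le> j" "j \<le> tm_rank rkG a" by auto
  moreover from this have "x \<noteq> []" "y \<noteq> []" by auto
  ultimately show ?case by (simp add: tup_intc_len)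
qed

lemma L_len: "v \<in> L A \<Longrightarrow> length v = rkG A + 1"
proof -
  assume "v \<in> L A"
  then have "tval RR (NT A) v" by (simp add: L_def LL_def)
  then obtain \<beta> where "(A, \<beta>) \<in> RR" "tval RR \<beta> v" by (auto simp: tval_NT)
  then show ?thesis using L_len_gen rule_wf by fastforce
qed

definition ur :: "'n \<Rightarrow> 'n \<Rightarrow> bool" where
  "ur A B \<longleftrightarrow> (\<exists>\<alpha>. (A, \<alpha>) \<in> RR \<and> nts \<alpha> = [B] \<and> ops \<alpha> = [])"

lemma ur_L: assumes "ur A B" shows "L B \<subseteq> L A \<and> rkG A = rkG B"
proof -
  obtain \<alpha> where a: "(A, \<alpha>) \<in> RR" "nts \<alpha> = [B]" "ops \<alpha> = []" using assms ur_def by blast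
  note w = rule_wf[OF a(1)]
  have "ops_rank (rkG B) (ops \<alpha>) = tm_rank rkG \<alpha>"
    using ops_correct[OF conjunct1[OF conjunct2[OF conjunct2 [OF w]]] a(2), of "replicate (rkG B + 1) []"] by simp
  then have r: "rkG A = rkG B" using w a by simp
  have "L B \<subseteq> L A"
  proof
    fix w assume wB: "w \<in> L B"
    then have "apply_ops (ops \<alpha>) w = val (subst \<alpha> w)"
      using ops_correct[of k rkG \<alpha> B w] w a L_len by blast
    then have "w = val (subst \<alpha> w)" using a by simp
    then have "w \<in> ev (LL RR) \<alpha>" using ev_lin[OF a(2)] wB by (auto simp: L_def)
    then show "w \<in> L A" using LL_rule[OF a(1)] by (auto simp: L_def)
  qed
  then show ?thesis using r by blast
qed

lemma urs_L: "ur\<^sup>*\<^sup>* A B \<Longrightarrow> L B \<subseteq> L A \<and> rkG A = rkG B"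
  by (induction rule: rtranclp_induct) (use ur_L in fastforce)+

definition zB :: "('a, 'n) tm \<Rightarrow> 'a tuple" where
  "zB \<alpha> = replicate (rkG (hd (nts \<alpha>)) + 1) []"
definition kval :: "('a, 'n) tm \<Rightarrow> 'a tuple" where
  "kval \<alpha> = val (subst \<alpha> (zB \<alpha>))"
definition kavail :: "('a, 'n) tm \<Rightarrow> bool" where
  "kavail \<alpha> \<longleftrightarrow> nts \<alpha> = [] \<or> zB \<alpha> \<in> L (hd (nts \<alpha>))"

definition gd :: "'a tuple \<Rightarrow> ('a, 'n) bse \<times> 'a eop list" where
  "gd v = (BL (fst (gdec v)), snd (gdec v))"

definition D :: "'n \<Rightarrow> (('a, 'n) bse \<times> 'a eop list) set" where
  "D A = {(BT (hd (nts \<alpha>)), ops \<alpha>) | A' \<alpha>. ur\<^sup>*\<^sup>* A A' \<and> (A', \<alpha>) \<in> RR \<and> nts \<alpha> \<noteq> [] \<and> ops \<alpha> \<noteq> []}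
       \<union> {gd (kval \<alpha>) | A' \<alpha>. ur\<^sup>*\<^sup>* A A' \<and> (A', \<alpha>) \<in> RR \<and> kavail \<alpha> \<and> tup_len (kval \<alpha>) \<noteq> 0}"

definition Dall where "Dall = (\<Union>A\<in>NN. D A)"

definition Chains :: "(('a, 'n) bse \<times> 'a eop list) set" where
  "Chains = {(b, take i os) | b os i. (b, os) \<in> Dall \<and> i < length os \<and> chain_ok b (take i os)}"

definition R2 :: "(('a, 'n) nt2 \<times> ('a, ('a, 'n) nt2) tm) set" where
  "R2 = {(Top A, prodrhs b os) | A b os. A \<in> NN \<and> (b, os) \<in> D A}
      \<union> {(St, prodrhs b os) | b os. (b, os) \<in> D SS}
      \<union> (if eps_tup \<in> L SS then {(St, Tup eps_tup)} else {})
      \<union> {(Ch b os, prodrhs b os) | b os. (b, os) \<in> Chains}"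

definition N2 :: "('a, 'n) nt2 set" where
  "N2 = Top ` NN \<union> {St} \<union> (\<lambda>(b, os). Ch b os) ` Chains"

fun brk :: "('a, 'n) bse \<Rightarrow> nat" where
  "brk (BT B) = rkG B"
| "brk (BL a) = 0"

fun rk2 :: "('a, 'n) nt2 \<Rightarrow> nat" where
  "rk2 (Top A) = rkG A"
| "rk2 St = 0"
| "rk2 (Ch b os) = ops_rank (brk b) os"

definition G2 :: "('a, ('a, 'n) nt2) dcfg" where
  "G2 = \<lparr>NTs = N2, rk = rk2, Rules = R2, Start = St\<rparr>"

definition L2 where "L2 X = LL R2 X"

end



context lin begin

lemma kval_props:
  assumes "(A', \<alpha>) \<in> RR" "kavail \<alpha>"
  shows "kval \<alpha> \<in> L A'" "length (kval \<alpha>) = rkG A' + 1"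
proof -
  note w = rule_wf[OF assms(1)]
  have len: "length (kval \<alpha>) = tm_rank rkG \<alpha> + 1"
    unfolding kval_def
  proof (rule len_val_subst)
    show "kcorrect k rkG \<alpha>" using w by blast
    show "\<forall>B\<in>set (nts \<alpha>). length (zB \<alpha>) = rkG B + 1"
      using rule_lin[OF assms(1)] by (metis empty_iff empty_set length_replicate set_ConsD zB_def)
  qed
  then show "length (kval \<alpha>) = rkG A' + 1" using w by simp
  show "kval \<alpha> \<in> L A'"
  proof (cases "nts \<alpha> = []")
    case True
    then have "kval \<alpha> \<in> ev (LL RR) \<alpha>" by (simp add: kval_def ev_ground subst_ground)
    then show ?thesis using LL_rule[OF assms(1)] by (auto simp: L_def)
  next
    case False
    then have n: "nts \<alpha> = [hd (nts \<alpha>)]" using rule_lin[OF assms(1)] by blast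
    have "zB \<alpha> \<in> L (hd (nts \<alpha>))" using False assms(2) kavail_def by blast
    then have "kval \<alpha> \<in> ev (LL RR) \<alpha>" unfolding kval_def ev_lin[OF n] by (auto simp: L_def)
    then show ?thesis using LL_rule[OF assms(1)] by (auto simp: L_def)
  qed
qed

lemma gd_ok:
  assumes "tup_len v \<noteq> 0" "length v \<le> k + 1"
  shows "apply_ops (snd (gd v)) [[fst (gdec v)]] = v \<and> ops_ok k 0 (snd (gd v)) \<and>
         ops_rank 0 (snd (gd v)) = length v - 1"
  using gdec_correct[OF assms] by (simp add: gd_def)

definition SB :: "('a, 'n) bse \<Rightarrow> 'a tuple set" where
  "SB b = (case b of BT B \<Rightarrow> Lp B | BL a \<Rightarrow> {[[a]]})"

fun Sem :: "('a, 'n) nt2 \<Rightarrow> 'a tuple set" where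
  "Sem (Top A) = Lp A"
| "Sem (Ch b os) = apply_ops os ` SB b"
| "Sem St = L SS"

lemma Sem_chnt: "Sem (chnt b os) = apply_ops os ` SB b"
  by (cases b) (auto simp: SB_def)

lemma ev_prodrhs: "ev Sem (prodrhs b os) = apply_ops os ` SB b"
proof (cases "os = []")
  case True
  then show ?thesis by (cases b) (auto simp: prodrhs_def SB_def)
next
  case False
  then show ?thesis
    by (simp add: ev_prodrhs_cons Sem_chnt image_image apply_ops_snoc)
qed

lemma D_sound: assumes "(b, os) \<in> D A" shows "apply_ops os ` SB b \<subseteq> Lp A"
  using assms unfolding D_def
proof (elim UnE CollectE exE conjE)
  fix A' \<alpha> assume h: "(b, os) = (BT (hd (nts \<alpha>)), ops \<alpha>)" "ur\<^sup>*\<^sup>* A A'" "(A', \<alpha>) \<in> RR"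
    "nts \<alpha> \<noteq> []" "ops \<alpha> \<noteq> []"
  note w = rule_wf[OF h(3)]
  define B where "B = hd (nts \<alpha>)"
  have n: "nts \<alpha> = [B]" using rule_lin[OF h(3)] h(4) B_def by blast
  show "apply_ops os ` SB b \<subseteq> Lp A"
  proof
    fix v assume "v \<in> apply_ops os ` SB b"
    then obtain x where x: "x \<in> Lp B" "v = apply_ops (ops \<alpha>) x" using h(1) by (auto simp: SB_def B_def)
    have lx: "length x = rkG B + 1" using x(1) L_len Lp_def by blast
    have oc: "apply_ops (ops \<alpha>) x = val (subst \<alpha> x)" "ops_ok k (rkG B) (ops \<alpha>)"
      using ops_correct[of k rkG \<alpha> B x] w n lx by auto
    have "val (subst \<alpha> x) \<in> ev (LL RR) \<alpha>" using ev_lin[OF n] x(1) by (auto simp: Lp_def L_def)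
    then have "v \<in> L A'" using LL_rule[OF h(3)] oc x by (auto simp: L_def)
    then have "v \<in> L A" using urs_L[OF h(2)] by blast
    moreover have "tup_len x \<le> tup_len v" using apply_ops_props[OF oc(2) lx] x by simp
    ultimately show "v \<in> Lp A" using x(1) by (auto simp: Lp_def)
  qed
next
  fix A' \<alpha> assume h: "(b, os) = gd (kval \<alpha>)" "ur\<^sup>*\<^sup>* A A'" "(A', \<alpha>) \<in> RR"
    "kavail \<alpha>" "tup_len (kval \<alpha>) \<noteq> 0"
  note kp = kval_props[OF h(3,4)]
  have "tm_rank rkG \<alpha> \<le> k" using rule_wf[OF h(3)] kcorrect_rank by blast
  then have "length (kval \<alpha>) \<le> k + 1" using kp rule_wf[OF h(3)] by simp
  note g = gd_ok[OF h(5) this]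
  have "apply_ops os ` SB b = {kval \<alpha>}" using h(1) g by (auto simp: SB_def gd_def)
  then show "apply_ops os ` SB b \<subseteq> Lp A" using kp(1) urs_L[OF h(2)] h(5) by (auto simp: Lp_def)
qed

lemma L2_sound: "L2 X \<subseteq> Sem X"
  unfolding L2_def
proof (rule LL_least)
  fix X \<beta> assume "(X, \<beta>) \<in> R2"
  then consider (top) A b os where "X = Top A" "\<beta> = prodrhs b os" "(b, os) \<in> D A"
    | (st) b os where "X = St" "\<beta> = prodrhs b os" "(b, os) \<in> D SS"
    | (eps) "X = St" "\<beta> = Tup eps_tup" "eps_tup \<in> L SS"
    | (ch) b os where "X = Ch b os" "\<beta> = prodrhs b os"
    unfolding R2_def by (auto split: if_splits)
  then show "ev Sem \<beta> \<subseteq> Sem X"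
  proof cases
    case top
    then show ?thesis using D_sound by (simp add: ev_prodrhs)
  next
    case st
    then have "apply_ops os ` SB b \<subseteq> Lp SS" using D_sound by blast
    then show ?thesis using st by (auto simp: ev_prodrhs Lp_def)
  next
    case eps
    then show ?thesis by simp
  next
    case ch
    then show ?thesis by (simp add: ev_prodrhs)
  qed
qed

end



context lin begin

definition SB2 :: "('a, 'n) bse \<Rightarrow> 'a tuple set" where
  "SB2 b = (case b of BT B \<Rightarrow> L2 (Top B) | BL a \<Rightarrow> {[[a]]})"

lemma R2_rule: "(X, \<beta>) \<in> R2 \<Longrightarrow> ev L2 \<beta> \<subseteq> L2 X"
  unfolding L2_def using LL_rule by (metis L2_def ext)

lemma D_chain_ok: "(b, os) \<in> D A \<Longrightarrow> chain_ok b os"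
  unfolding D_def gd_def by auto

lemma Chains_butlast:
  assumes "(b, os) \<in> Chains" "os \<noteq> []" "chain_ok b (butlast os)"
  shows "(b, butlast os) \<in> Chains"
proof -
  obtain os0 i where h: "os = take i os0" "(b, os0) \<in> Dall" "i < length os0"
    using assms(1) unfolding Chains_def by blast
  have "butlast os = take (i - 1) os0" using h by (simp add: butlast_take)
  moreover have "i - 1 < length os0" using h by simp
  ultimately show ?thesis using h assms(3) unfolding Chains_def
    by (intro CollectI exI[of _ b] exI[of _ os0] exI[of _ "i - 1"]) simp
qed

lemma Dall_chain:
  assumes "(b, os) \<in> Dall" "os \<noteq> []" "chain_ok b (butlast os)"
  shows "(b, butlast os) \<in> Chains"
proof -
  have "butlast os = take (length os - 1) os" by (simp add: butlast_conv_take)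
  moreover have "length os - 1 < length os" using assms by simp
  ultimately show ?thesis using assms unfolding Chains_def
    by (intro CollectI exI[of _ b] exI[of _ os] exI[of _ "length os - 1"]) simp
qed

lemma chnt_cases:
  "(chnt b os = Ch b os \<and> chain_ok b os) \<or> (\<exists>B. b = BT B \<and> os = [] \<and> chnt b os = Top B)"
  by (cases b) auto

lemma C1: "(b, os) \<in> Chains \<Longrightarrow> apply_ops os ` SB2 b \<subseteq> L2 (Ch b os)"
proof (induction os rule: rev_induct)
  case Nil
  then have "chain_ok b []" unfolding Chains_def by auto
  then obtain a where b: "b = BL a" by (cases b) auto
  have "(Ch b [], prodrhs b []) \<in> R2" using Nil unfolding R2_def by blast
  from R2_rule[OF this] show ?case by (simp add: b prodrhs_def SB2_def)
next
  case (snoc e os)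
  have r: "(Ch b (os @ [e]), prodrhs b (os @ [e])) \<in> R2" using snoc unfolding R2_def by blast
  have sub: "apply_ops os ` SB2 b \<subseteq> L2 (chnt b os)"
    using chnt_cases[of b os]
  proof
    assume h: "chnt b os = Ch b os \<and> chain_ok b os"
    then have "(b, os) \<in> Chains" using Chains_butlast[OF snoc.prems] by simp
    then show ?thesis using snoc.IH h by simp
  next
    assume "\<exists>B. b = BT B \<and> os = [] \<and> chnt b os = Top B"
    then show ?thesis by (auto simp: SB2_def)
  qed
  have "ev L2 (prodrhs b (os @ [e])) = apply_op e ` L2 (chnt b os)"
    by (simp add: ev_prodrhs_cons)
  then have "apply_op e ` L2 (chnt b os) \<subseteq> L2 (Ch b (os @ [e]))" using R2_rule[OF r] by simp
  then show ?case using sub by auto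
qed

definition tgt :: "('a, 'n) nt2 \<Rightarrow> 'n \<Rightarrow> bool" where
  "tgt X A0 \<longleftrightarrow> (X = Top A0 \<and> A0 \<in> NN) \<or> (X = St \<and> A0 = SS)"

lemma S_in: "SS \<in> NN" using wf unfolding is_kDCFG_def by blast

lemma C2:
  assumes "(b, os) \<in> D A0" "tgt X A0"
  shows "apply_ops os ` SB2 b \<subseteq> L2 X"
proof -
  have r: "(X, prodrhs b os) \<in> R2" using assms unfolding R2_def tgt_def by blast
  have A0: "A0 \<in> NN" using assms(2) S_in tgt_def by auto
  have Dall: "(b, os) \<in> Dall" using assms A0 Dall_def by blast
  show ?thesis
  proof (cases "os = []")
    case True
    then obtain a where b: "b = BL a" using D_chain_ok[OF assms(1)] by (cases b) auto
    from R2_rule[OF r] show ?thesis by (simp add: b True prodrhs_def SB2_def)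
  next
    case False
    have sub: "apply_ops (butlast os) ` SB2 b \<subseteq> L2 (chnt b (butlast os))"
      using chnt_cases[of b "butlast os"]
    proof
      assume h: "chnt b (butlast os) = Ch b (butlast os) \<and> chain_ok b (butlast os)"
      then have "(b, butlast os) \<in> Chains" using Dall_chain[OF Dall False] by simp
      then show ?thesis using C1 h by simp
    next
      assume "\<exists>B. b = BT B \<and> butlast os = [] \<and> chnt b (butlast os) = Top B"
      then show ?thesis by (auto simp: SB2_def)
    qed
    have "ev L2 (prodrhs b os) = apply_op (last os) ` L2 (chnt b (butlast os))"
      using False by (simp add: ev_prodrhs_cons)
    then have "apply_op (last os) ` L2 (chnt b (butlast os)) \<subseteq> L2 X" using R2_rule[OF r] by simp
    then show ?thesis using sub False by (auto simp: apply_ops_snoc)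
  qed
qed

lemma const_case:
  assumes "(A', \<beta>) \<in> RR" "ur\<^sup>*\<^sup>* A0 A'" "kavail \<beta>" "tup_len (kval \<beta>) \<noteq> 0" "tgt X A0"
  shows "kval \<beta> \<in> L2 X"
proof -
  have D: "gd (kval \<beta>) \<in> D A0" using assms unfolding D_def by blast
  note kp = kval_props[OF assms(1,3)]
  have "tm_rank rkG \<beta> \<le> k" using rule_wf[OF assms(1)] kcorrect_rank by blast
  then have "length (kval \<beta>) \<le> k + 1" using kp rule_wf[OF assms(1)] by simp
  note g = gd_ok[OF assms(4) this]
  have "apply_ops (snd (gd (kval \<beta>))) ` SB2 (fst (gd (kval \<beta>))) \<subseteq> L2 X"
    using C2[of "fst (gd (kval \<beta>))" "snd (gd (kval \<beta>))" A0 X] D assms(5) by simp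
  then show ?thesis using g by (simp add: gd_def SB2_def)
qed

definition Qp :: "'n \<Rightarrow> 'a tuple \<Rightarrow> bool" where
  "Qp A v \<longleftrightarrow> (tup_len v \<noteq> 0 \<longrightarrow> (\<forall>A0 X. ur\<^sup>*\<^sup>* A0 A \<longrightarrow> tgt X A0 \<longrightarrow> v \<in> L2 X))"

definition Pp :: "('a, 'n) tm \<Rightarrow> 'a tuple \<Rightarrow> bool" where
  "Pp \<alpha> v \<longleftrightarrow> (nts \<alpha> = [] \<longrightarrow> v = val \<alpha>) \<and>
     (\<forall>B. nts \<alpha> = [B] \<longrightarrow> (\<exists>w. tval RR (NT B) w \<and> Qp B w \<and> v = val (subst \<alpha> w)))"

lemma NT_step:
  assumes r: "(A, \<beta>) \<in> RR" and tv: "tval RR \<beta> v" and P: "Pp \<beta> v"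
  shows "Qp A v"
  unfolding Qp_def
proof (intro impI allI)
  fix A0 X assume len: "tup_len v \<noteq> 0" and u: "ur\<^sup>*\<^sup>* A0 A" and t: "tgt X A0"
  note w = rule_wf[OF r]
  show "v \<in> L2 X"
  proof (cases "nts \<beta> = []")
    case True
    then have "v = val \<beta>" using P Pp_def by blast
    then have "v = kval \<beta>" using True by (simp add: kval_def subst_ground)
    moreover have "kavail \<beta>" using True kavail_def by blast
    ultimately show ?thesis using const_case[OF r u _ _ t] len by simp
  next
    case False
    define B where "B = hd (nts \<beta>)"
    have n: "nts \<beta> = [B]" using rule_lin[OF r] False B_def by blast
    obtain x where x: "tval RR (NT B) x" "Qp B x" "v = val (subst \<beta> x)" using P n Pp_def by blast
    have xL: "x \<in> L B" using x(1) by (simp add: L_def LL_def)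
    have lx: "length x = rkG B + 1" using L_len[OF xL] .
    have oc: "apply_ops (ops \<beta>) x = v" "ops_ok k (rkG B) (ops \<beta>)"
      using ops_correct[of k rkG \<beta> B x] w n lx x(3) by auto
    show ?thesis
    proof (cases "ops \<beta> = []")
      case True
      then have "ur A B" using r n ur_def by blast
      then have "ur\<^sup>*\<^sup>* A0 B" using u by simp
      moreover have "x = v" using oc True by simp
      ultimately show ?thesis using x(2) len t Qp_def by blast
    next
      case nonunit: False
      show ?thesis
      proof (cases "tup_len x = 0")
        case False
        have BN: "B \<in> NN" using w n by simp
        have "x \<in> L2 (Top B)" using x(2) False BN unfolding Qp_def tgt_def by blast
        moreover have "(BT B, ops \<beta>) \<in> D A0" using u r n nonunit unfolding D_def by force
        ultimately show ?thesis using C2[OF _ t] oc by (force simp: SB2_def)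
      next
        case True
        have "\<forall>y\<in>set x. y = []" using True by (simp add: tup_len_def sum_list_eq_0_iff)
        then have "replicate (length x) [] = x" by (rule replicate_length_same)
        then have "x = replicate (rkG B + 1) []" using lx by simp
        then have xz: "x = zB \<beta>" using n by (simp add: zB_def)
        then have "kavail \<beta>" using xL n kavail_def by simp
        moreover have "kval \<beta> = v" using xz x(3) kval_def by simp
        ultimately show ?thesis using const_case[OF r u _ _ t] len by simp
      qed
    qed
  qed
qed

lemma tval_Pp: "tval RR \<alpha> v \<Longrightarrow> Pp \<alpha> v"
proof (induction rule: tval.induct)
  case (tTup u)
  then show ?case by (simp add: Pp_def)
next
  case (tNT A \<beta> v)
  then have "Qp A v" using NT_step by blast
  moreover have "tval RR (NT A) v" using tNT by (auto intro: tval.tNT)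
  ultimately show ?case by (auto simp: Pp_def)
next
  case (tCat a x b y)
  show ?case unfolding Pp_def
  proof (intro conjI allI impI)
    assume "nts (Cat a b) = []"
    then show "tup_cat x y = val (Cat a b)" using tCat.IH by (simp add: Pp_def)
  next
    fix B assume "nts (Cat a b) = [B]"
    then consider "nts a = [B]" "nts b = []" | "nts a = []" "nts b = [B]"
      by (cases "nts a") auto
    then show "\<exists>w. tval RR (NT B) w \<and> Qp B w \<and> tup_cat x y = val (subst (Cat a b) w)"
    proof cases
      case 1
      then show ?thesis using tCat.IH by (auto simp: Pp_def subst_ground)
    next
      case 2
      then show ?thesis using tCat.IH by (auto simp: Pp_def subst_ground)
    qed
  qed
next
  case (tIntc a x b y j)
  show ?case unfolding Pp_def
  proof (intro conjI allI impI)
    assume "nts (Intc j a b) = []"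
    then show "tup_intc j x y = val (Intc j a b)" using tIntc.IH by (simp add: Pp_def)
  next
    fix B assume "nts (Intc j a b) = [B]"
    then consider "nts a = [B]" "nts b = []" | "nts a = []" "nts b = [B]"
      by (cases "nts a") auto
    then show "\<exists>w. tval RR (NT B) w \<and> Qp B w \<and> tup_intc j x y = val (subst (Intc j a b) w)"
    proof cases
      case 1
      then show ?thesis using tIntc.IH by (auto simp: Pp_def subst_ground)
    next
      case 2
      then show ?thesis using tIntc.IH by (auto simp: Pp_def subst_ground)
    qed
  qed
qed

lemma L2_St: "L2 St = L SS"
proof
  show "L2 St \<subseteq> L SS" using L2_sound[of St] by simp
  show "L SS \<subseteq> L2 St"
  proof
    fix v assume v: "v \<in> L SS"
    then have tv: "tval RR (NT SS) v" by (simp add: L_def LL_def)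
    show "v \<in> L2 St"
    proof (cases "tup_len v = 0")
      case False
      have "Pp (NT SS) v" using tval_Pp[OF tv] .
      then have "Qp SS v" by (auto simp: Pp_def)
      then show ?thesis using False unfolding Qp_def tgt_def by blast
    next
      case True
      have "length v = 1" using L_len[OF v] wf unfolding is_kDCFG_def by simp
      then obtain x where "v = [x]" by (cases v) auto
      then have ve: "v = eps_tup" using True by (simp add: tup_len_def eps_tup_def)
      then have "(St, Tup eps_tup) \<in> R2" using v unfolding R2_def by simp
      from R2_rule[OF this] show ?thesis using ve by simp
    qed
  qed
qed

end



context lin begin

lemma D_wf:
  assumes "(b, os) \<in> D A"
  shows "ops_ok k (brk b) os \<and> ops_rank (brk b) os = rkG A \<and> (\<forall>B. b = BT B \<longrightarrow> B \<in> NN)"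
  using assms unfolding D_def
proof (elim UnE CollectE exE conjE)
  fix A' \<alpha> assume h: "(b, os) = (BT (hd (nts \<alpha>)), ops \<alpha>)" "ur\<^sup>*\<^sup>* A A'" "(A', \<alpha>) \<in> RR"
    "nts \<alpha> \<noteq> []" "ops \<alpha> \<noteq> []"
  note w = rule_wf[OF h(3)]
  define B where "B = hd (nts \<alpha>)"
  have n: "nts \<alpha> = [B]" using rule_lin[OF h(3)] h(4) B_def by blast
  have oc: "ops_ok k (rkG B) (ops \<alpha>)" "ops_rank (rkG B) (ops \<alpha>) = tm_rank rkG \<alpha>"
    using ops_correct[of k rkG \<alpha> B "replicate (rkG B + 1) []"] w n by auto
  have b: "b = BT B" "os = ops \<alpha>" using h(1) B_def by auto
  have r: "tm_rank rkG \<alpha> = rkG A" using w urs_L[OF h(2)] by simp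
  have BN: "B \<in> NN" using w n by simp
  show ?thesis using oc b r BN by simp
next
  fix A' \<alpha> assume h: "(b, os) = gd (kval \<alpha>)" "ur\<^sup>*\<^sup>* A A'" "(A', \<alpha>) \<in> RR"
    "kavail \<alpha>" "tup_len (kval \<alpha>) \<noteq> 0"
  note kp = kval_props[OF h(3,4)]
  have "tm_rank rkG \<alpha> \<le> k" using rule_wf[OF h(3)] kcorrect_rank by blast
  then have "length (kval \<alpha>) \<le> k + 1" using kp rule_wf[OF h(3)] by simp
  note g = gd_ok[OF h(5) this]
  have b: "b = BL (fst (gdec (kval \<alpha>)))" "os = snd (gd (kval \<alpha>))" using h(1) by (auto simp: gd_def)
  have r: "length (kval \<alpha>) - 1 = rkG A" using kp urs_L[OF h(2)] by simp
  show ?thesis using g b r by simp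
qed

lemma finite_D: "finite (D A)"
proof -
  have "D A \<subseteq> (\<lambda>(A', \<alpha>). (BT (hd (nts \<alpha>)), ops \<alpha>)) ` RR \<union> (\<lambda>(A', \<alpha>). gd (kval \<alpha>)) ` RR"
    unfolding D_def by force
  moreover have "finite RR" using wf unfolding is_kDCFG_def by blast
  ultimately show ?thesis by (meson finite_Un finite_imageI finite_subset)
qed

lemma finite_NN: "finite NN" using wf unfolding is_kDCFG_def by blast

lemma finite_Dall: "finite Dall"
  unfolding Dall_def using finite_D finite_NN by blast

lemma finite_Chains: "finite Chains"
proof -
  have "Chains \<subseteq> (\<Union>p\<in>Dall. (\<lambda>i. (fst p, take i (snd p))) ` {..<length (snd p)})"
  proof
    fix x assume "x \<in> Chains"
    then obtain b os i where h: "x = (b, take i os)" "(b, os) \<in> Dall" "i < length os"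
      unfolding Chains_def by blast
    then show "x \<in> (\<Union>p\<in>Dall. (\<lambda>i. (fst p, take i (snd p))) ` {..<length (snd p)})"
      by (intro UN_I[of "(b, os)"]) auto
  qed
  moreover have "finite (\<Union>p\<in>Dall. (\<lambda>i. (fst p, take i (snd p))) ` {..<length (snd p)})"
    using finite_Dall by simp
  ultimately show ?thesis using finite_subset by blast
qed

lemma Chains_wf:
  assumes "(b, os) \<in> Chains"
  shows "chain_ok b os \<and> ops_ok k (brk b) os \<and> (\<forall>B. b = BT B \<longrightarrow> B \<in> NN)"
proof -
  obtain os0 i A where h: "os = take i os0" "(b, os0) \<in> D A" "i < length os0" "chain_ok b os"
    using assms unfolding Chains_def Dall_def by blast
  note dw = D_wf[OF h(2)]
  have "ops_ok k (brk b) (take i os0 @ drop i os0)" using dw by simp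
  then have "ops_ok k (brk b) os" using h(1) ops_ok_append by blast
  then show ?thesis using h dw by blast
qed

lemma rk2_chnt: "rk2 (chnt b os) = ops_rank (brk b) os"
  by (cases b) auto

lemma opterm_wf:
  assumes "op_ok k r e" "r \<le> k" "rk2 Y = r"
  shows "kcorrect k rk2 (opterm e (NT Y)) \<and> tm_rank rk2 (opterm e (NT Y)) = op_rk r e \<and>
     (\<forall>u\<in>set (leaf_tuples (opterm e (NT Y))). tup_len u \<le> 1) \<and> nts (opterm e (NT Y)) = [Y] \<and>
     nf_rule G2 (X, opterm e (NT Y))"
  using assms by (cases e) (auto simp: nf_rule_def tup_rank_def)

lemma prodrhs_wf:
  assumes "chain_ok b os" "ops_ok k (brk b) os" "\<forall>B. b = BT B \<longrightarrow> B \<in> NN"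
    "os \<noteq> [] \<longrightarrow> chain_ok b (butlast os) \<longrightarrow> (b, butlast os) \<in> Chains"
  shows "set (nts (prodrhs b os)) \<subseteq> N2 \<and> kcorrect k rk2 (prodrhs b os) \<and>
     tm_rank rk2 (prodrhs b os) = ops_rank (brk b) os \<and>
     (\<forall>u\<in>set (leaf_tuples (prodrhs b os)). tup_len u \<le> 1) \<and> nf_rule G2 (X, prodrhs b os)"
proof (cases "os = []")
  case True
  then obtain a where b: "b = BL a" using assms(1) by (cases b) auto
  then show ?thesis using True
    by (simp add: prodrhs_def nf_rule_def tup_rank_def tup_len_def)
next
  case False
  define Y where "Y = chnt b (butlast os)"
  have os: "os = butlast os @ [last os]" using False by simp
  have "ops_ok k (ops_rank (brk b) (butlast os)) [last os]"
    using assms(2) ops_ok_append os by metis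
  then have ok: "op_ok k (ops_rank (brk b) (butlast os)) (last os)" "ops_rank (brk b) (butlast os) \<le> k"
    by auto
  have rkY: "rk2 Y = ops_rank (brk b) (butlast os)" by (simp add: Y_def rk2_chnt)
  have YN: "Y \<in> N2"
    using chnt_cases[of b "butlast os"]
  proof
    assume h: "chnt b (butlast os) = Ch b (butlast os) \<and> chain_ok b (butlast os)"
    then have "(b, butlast os) \<in> Chains" using assms(4) False by simp
    then show ?thesis using h unfolding Y_def N2_def by force
  next
    assume "\<exists>B. b = BT B \<and> butlast os = [] \<and> chnt b (butlast os) = Top B"
    then show ?thesis using assms(3) unfolding Y_def N2_def by auto
  qed
  have pr: "prodrhs b os = opterm (last os) (NT Y)" using False by (simp add: prodrhs_def Y_def)
  have rk: "ops_rank (brk b) os = op_rk (ops_rank (brk b) (butlast os)) (last os)"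
    by (subst os) simp
  show ?thesis using opterm_wf[OF ok rkY, of X] YN unfolding pr rk by simp
qed

lemma SS_rk: "rkG SS = 0" using wf unfolding is_kDCFG_def by blast

lemma G2_wf: "is_kDCFG k G2 \<and> (\<forall>r \<in> Rules G2. nf_rule G2 r)"
proof -
  have fin: "finite N2" unfolding N2_def using finite_NN finite_Chains by blast
  have "finite {(Top A, prodrhs b os) | A b os. A \<in> NN \<and> (b, os) \<in> D A}"
  proof -
    have "{(Top A, prodrhs b os) | A b os. A \<in> NN \<and> (b, os) \<in> D A}
        \<subseteq> (\<Union>A\<in>NN. (\<lambda>p. (Top A, prodrhs (fst p) (snd p))) ` D A)" by force
    moreover have "finite (\<Union>A\<in>NN. (\<lambda>p. (Top A, prodrhs (fst p) (snd p))) ` D A)"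
    using finite_NN finite_D by simp
  ultimately show ?thesis using finite_subset by blast
  qed
  moreover have "finite {(St, prodrhs b os) | b os. (b, os) \<in> D SS}"
  proof -
    have "{(St, prodrhs b os) | b os. (b, os) \<in> D SS} \<subseteq> (\<lambda>p. (St, prodrhs (fst p) (snd p))) ` D SS"
      by force
    moreover have "finite ((\<lambda>p. (St, prodrhs (fst p) (snd p))) ` D SS)" using finite_D by simp
    ultimately show ?thesis using finite_subset by blast
  qed
  moreover have "finite {(Ch b os, prodrhs b os) | b os. (b, os) \<in> Chains}"
  proof -
    have "{(Ch b os, prodrhs b os) | b os. (b, os) \<in> Chains} \<subseteq> (\<lambda>p. (Ch (fst p) (snd p), prodrhs (fst p) (snd p))) ` Chains"
      by force
    moreover have "finite ((\<lambda>p. (Ch (fst p) (snd p), prodrhs (fst p) (snd p))) ` Chains)" using finite_Chains by simp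
    ultimately show ?thesis using finite_subset by blast
  qed
  ultimately have finR: "finite R2" unfolding R2_def by simp
  have rules: "X \<in> N2 \<and> set (nts \<beta>) \<subseteq> N2 \<and> kcorrect k rk2 \<beta> \<and> tm_rank rk2 \<beta> = rk2 X \<and>
        (\<forall>u \<in> set (leaf_tuples \<beta>). tup_len u \<le> 1) \<and> nf_rule G2 (X, \<beta>)" if r: "(X, \<beta>) \<in> R2" for X \<beta>
  proof -
    from r consider (top) A b os where "X = Top A" "\<beta> = prodrhs b os" "A \<in> NN" "(b, os) \<in> D A"
      | (st) b os where "X = St" "\<beta> = prodrhs b os" "(b, os) \<in> D SS"
      | (eps) "X = St" "\<beta> = Tup eps_tup"
      | (ch) b os where "X = Ch b os" "\<beta> = prodrhs b os" "(b, os) \<in> Chains"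
      unfolding R2_def by (auto split: if_splits)
    then show ?thesis
    proof cases
      case top
      have "(b, os) \<in> Dall" using top Dall_def by blast
      then have c: "os \<noteq> [] \<longrightarrow> chain_ok b (butlast os) \<longrightarrow> (b, butlast os) \<in> Chains"
        using Dall_chain by blast
      show ?thesis using prodrhs_wf[OF D_chain_ok[OF top(4)] _ _ c, of X] D_wf[OF top(4)] top
        unfolding N2_def by auto
    next
      case st
      have "(b, os) \<in> Dall" using st Dall_def S_in by blast
      then have c: "os \<noteq> [] \<longrightarrow> chain_ok b (butlast os) \<longrightarrow> (b, butlast os) \<in> Chains"
        using Dall_chain by blast
      show ?thesis using prodrhs_wf[OF D_chain_ok[OF st(3)] _ _ c, of X] D_wf[OF st(3)] st SS_rk
        unfolding N2_def by auto
    next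
      case eps
      then show ?thesis by (simp add: N2_def nf_rule_def G2_def eps_tup_def tup_rank_def tup_len_def)
    next
      case ch
      have c: "os \<noteq> [] \<longrightarrow> chain_ok b (butlast os) \<longrightarrow> (b, butlast os) \<in> Chains"
        using Chains_butlast ch by blast
      note cw = Chains_wf[OF ch(3)]
      show ?thesis using prodrhs_wf[OF _ _ _ c, of X] cw ch unfolding N2_def by force
    qed
  qed
  have StN: "St \<in> N2" by (simp add: N2_def)
  have "\<forall>(A, \<alpha>) \<in> R2. A \<in> N2 \<and> set (nts \<alpha>) \<subseteq> N2 \<and> kcorrect k rk2 \<alpha> \<and> tm_rank rk2 \<alpha> = rk2 A \<and>
        (\<forall>u \<in> set (leaf_tuples \<alpha>). tup_len u \<le> 1)" using rules by blast
  then have "is_kDCFG k G2"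
    unfolding is_kDCFG_def G2_def using fin finR StN by simp
  moreover have "\<forall>r \<in> Rules G2. nf_rule G2 r" using rules by (auto simp: G2_def)
  ultimately show ?thesis by blast
qed

lemma G2_lang: "Lang G2 = Lang G"
  unfolding Lang_def LangNT_LL
  using L2_St by (simp add: G2_def L2_def L_def)

end



fun rn :: "('m \<Rightarrow> 'p) \<Rightarrow> ('a, 'm) tm \<Rightarrow> ('a, 'p) tm" where
  "rn f (Tup u) = Tup u"
| "rn f (NT A) = NT (f A)"
| "rn f (Cat a b) = Cat (rn f a) (rn f b)"
| "rn f (Intc j a b) = Intc j (rn f a) (rn f b)"

lemma rn_nts: "nts (rn f \<alpha>) = map f (nts \<alpha>)"
  by (induction \<alpha>) auto

lemma rn_leaf: "leaf_tuples (rn f \<alpha>) = leaf_tuples \<alpha>"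
  by (induction \<alpha>) auto

lemma rn_rank: "(\<forall>X\<in>set (nts \<alpha>). ra (f X) = rb X) \<Longrightarrow> tm_rank ra (rn f \<alpha>) = tm_rank rb \<alpha>"
  by (induction \<alpha>) auto

lemma rn_kcorrect: "(\<forall>X\<in>set (nts \<alpha>). ra (f X) = rb X) \<Longrightarrow> kcorrect k ra (rn f \<alpha>) = kcorrect k rb \<alpha>"
proof (induction \<alpha>)
  case (Cat a b)
  have "tm_rank ra (rn f a) = tm_rank rb a" "tm_rank ra (rn f b) = tm_rank rb b"
    using Cat.prems by (auto intro: rn_rank)
  then show ?case using Cat by auto
next
  case (Intc j a b)
  have "tm_rank ra (rn f a) = tm_rank rb a" "tm_rank ra (rn f b) = tm_rank rb b"
    using Intc.prems by (auto intro: rn_rank)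
  then show ?case using Intc by auto
qed auto

definition renR :: "('m \<Rightarrow> 'p) \<Rightarrow> ('m \<times> ('a, 'm) tm) set \<Rightarrow> ('p \<times> ('a, 'p) tm) set" where
  "renR f R = (\<lambda>(X, \<alpha>). (f X, rn f \<alpha>)) ` R"

lemma tval_rn: "tval R \<alpha> v \<Longrightarrow> tval (renR f R) (rn f \<alpha>) v"
proof (induction rule: tval.induct)
  case (tNT A \<beta> v)
  then have "(f A, rn f \<beta>) \<in> renR f R" unfolding renR_def by force
  then show ?case using tNT by (auto intro: tval.tNT)
qed (auto intro: tval.intros)

lemma rn_inj:
  "rn f \<alpha> = rn f \<alpha>' \<Longrightarrow> set (nts \<alpha>) \<subseteq> N \<Longrightarrow> set (nts \<alpha>') \<subseteq> N \<Longrightarrow> inj_on f N \<Longrightarrow> \<alpha> = \<alpha>'"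
proof (induction \<alpha> arbitrary: \<alpha>')
  case (Tup x)
  then show ?case by (cases \<alpha>') auto
next
  case (NT x)
  then show ?case by (cases \<alpha>') (auto dest: inj_onD)
next
  case (Cat a b)
  then show ?case by (cases \<alpha>') auto
next
  case (Intc j a b)
  then show ?case by (cases \<alpha>') auto
qed

lemma tval_rn_back:
  assumes inj: "inj_on f N" and RN: "\<forall>(X, \<alpha>) \<in> R. X \<in> N \<and> set (nts \<alpha>) \<subseteq> N"
  shows "tval (renR f R) \<beta> v \<Longrightarrow> \<beta> = rn f \<alpha> \<Longrightarrow> set (nts \<alpha>) \<subseteq> N \<Longrightarrow> tval R \<alpha> v"
proof (induction arbitrary: \<alpha> rule: tval.induct)
  case (tTup u)
  then show ?case by (cases \<alpha>) auto
next
  case (tNT A \<beta> v)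
  then obtain X where X: "\<alpha> = NT X" "A = f X" "X \<in> N" by (cases \<alpha>) auto
  from tNT(1) obtain X' \<alpha>' where r: "(X', \<alpha>') \<in> R" "A = f X'" "\<beta> = rn f \<alpha>'"
    unfolding renR_def by auto
  have "X' \<in> N" "set (nts \<alpha>') \<subseteq> N" using RN r by auto
  then have "X' = X" using inj X r by (auto dest: inj_onD)
  moreover have "tval R \<alpha>' v" using tNT.IH r \<open>set (nts \<alpha>') \<subseteq> N\<close> by blast
  ultimately show ?case using r X by (auto intro: tval.tNT)
next
  case (tCat a x b y)
  then obtain a' b' where "\<alpha> = Cat a' b'" by (cases \<alpha>) auto
  then show ?case using tCat by auto
next
  case (tIntc a x b y j)
  then obtain a' b' where "\<alpha> = Intc j a' b'" by (cases \<alpha>) auto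
  then show ?case using tIntc by auto
qed

lemma nf_rule_rn:
  assumes "nf_rule G2 (X, \<beta>)" "Start G' = f (Start G2)"
  shows "nf_rule G' (f X, rn f \<beta>)"
  using assms(1) unfolding nf_rule_def
proof (elim disjE exE conjE)
  fix A B u assume "(X, \<beta>) = (A, Cat (Tup u) (NT B))" "tup_len u \<le> 1" "u \<noteq> eps_tup"
  then show "(\<exists>A B u. (f X, rn f \<beta>) = (A, Cat (Tup u) (NT B)) \<and> tup_len u \<le> 1 \<and> u \<noteq> eps_tup) \<or>
    (\<exists>A B u. (f X, rn f \<beta>) = (A, Cat (NT B) (Tup u)) \<and> tup_len u \<le> 1 \<and> u \<noteq> eps_tup) \<or>
    (\<exists>A B j u. (f X, rn f \<beta>) = (A, Intc j (NT B) (Tup u)) \<and> tup_len u \<le> 1) \<or>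
    (\<exists>A u. (f X, rn f \<beta>) = (A, Tup u) \<and> tup_len u = 1) \<or> (f X, rn f \<beta>) = (Start G', Tup eps_tup)"
    by (intro disjI1 exI[of _ "f A"] exI[of _ "f B"] exI[of _ u]) simp
next
  fix A B u assume "(X, \<beta>) = (A, Cat (NT B) (Tup u))" "tup_len u \<le> 1" "u \<noteq> eps_tup"
  then show "(\<exists>A B u. (f X, rn f \<beta>) = (A, Cat (Tup u) (NT B)) \<and> tup_len u \<le> 1 \<and> u \<noteq> eps_tup) \<or>
    (\<exists>A B u. (f X, rn f \<beta>) = (A, Cat (NT B) (Tup u)) \<and> tup_len u \<le> 1 \<and> u \<noteq> eps_tup) \<or>
    (\<exists>A B j u. (f X, rn f \<beta>) = (A, Intc j (NT B) (Tup u)) \<and> tup_len u \<le> 1) \<or>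
    (\<exists>A u. (f X, rn f \<beta>) = (A, Tup u) \<and> tup_len u = 1) \<or> (f X, rn f \<beta>) = (Start G', Tup eps_tup)"
    by (intro disjI2 disjI1 exI[of _ "f A"] exI[of _ "f B"] exI[of _ u]) simp
next
  fix A B j u assume "(X, \<beta>) = (A, Intc j (NT B) (Tup u))" "tup_len u \<le> 1"
  then show "(\<exists>A B u. (f X, rn f \<beta>) = (A, Cat (Tup u) (NT B)) \<and> tup_len u \<le> 1 \<and> u \<noteq> eps_tup) \<or>
    (\<exists>A B u. (f X, rn f \<beta>) = (A, Cat (NT B) (Tup u)) \<and> tup_len u \<le> 1 \<and> u \<noteq> eps_tup) \<or>
    (\<exists>A B j u. (f X, rn f \<beta>) = (A, Intc j (NT B) (Tup u)) \<and> tup_len u \<le> 1) \<or>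
    (\<exists>A u. (f X, rn f \<beta>) = (A, Tup u) \<and> tup_len u = 1) \<or> (f X, rn f \<beta>) = (Start G', Tup eps_tup)"
    by (intro disjI2 disjI2 disjI1 exI[of _ "f A"] exI[of _ "f B"] exI[of _ j] exI[of _ u]) simp
next
  fix A u assume "(X, \<beta>) = (A, Tup u)" "tup_len u = 1"
  then show "(\<exists>A B u. (f X, rn f \<beta>) = (A, Cat (Tup u) (NT B)) \<and> tup_len u \<le> 1 \<and> u \<noteq> eps_tup) \<or>
    (\<exists>A B u. (f X, rn f \<beta>) = (A, Cat (NT B) (Tup u)) \<and> tup_len u \<le> 1 \<and> u \<noteq> eps_tup) \<or>
    (\<exists>A B j u. (f X, rn f \<beta>) = (A, Intc j (NT B) (Tup u)) \<and> tup_len u \<le> 1) \<or>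
    (\<exists>A u. (f X, rn f \<beta>) = (A, Tup u) \<and> tup_len u = 1) \<or> (f X, rn f \<beta>) = (Start G', Tup eps_tup)"
    by (intro disjI2 disjI2 disjI2 disjI1 exI[of _ "f A"] exI[of _ u]) simp
next
  assume "(X, \<beta>) = (Start G2, Tup eps_tup)"
  then show "(\<exists>A B u. (f X, rn f \<beta>) = (A, Cat (Tup u) (NT B)) \<and> tup_len u \<le> 1 \<and> u \<noteq> eps_tup) \<or>
    (\<exists>A B u. (f X, rn f \<beta>) = (A, Cat (NT B) (Tup u)) \<and> tup_len u \<le> 1 \<and> u \<noteq> eps_tup) \<or>
    (\<exists>A B j u. (f X, rn f \<beta>) = (A, Intc j (NT B) (Tup u)) \<and> tup_len u \<le> 1) \<or>
    (\<exists>A u. (f X, rn f \<beta>) = (A, Tup u) \<and> tup_len u = 1) \<or> (f X, rn f \<beta>) = (Start G', Tup eps_tup)"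
    using assms(2) by simp
qed

lemma rename_grammar:
  fixes G2 :: "('a, 'm) dcfg"
  assumes wf: "is_kDCFG k G2" and nf: "\<forall>r \<in> Rules G2. nf_rule G2 r"
  shows "\<exists>G' :: ('a, nat) dcfg. is_kDCFG k G' \<and> (\<forall>r \<in> Rules G'. nf_rule G' r) \<and>
           Lang G' = Lang G2"
proof -
  have "finite (NTs G2)" using wf unfolding is_kDCFG_def by blast
  then obtain f :: "'m \<Rightarrow> nat" where inj: "inj_on f (NTs G2)"
    using finite_imp_inj_to_nat_seg by blast
  define N where "N = NTs G2"
  define r' where "r' = (\<lambda>n. rk G2 (inv_into N f n))"
  define G' :: "('a, nat) dcfg" where
    "G' = \<lparr>NTs = f ` N, rk = r', Rules = renR f (Rules G2), Start = f (Start G2)\<rparr>"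
  have injN: "inj_on f N" using inj N_def by simp
  have rr: "r' (f X) = rk G2 X" if "X \<in> N" for X
    using that injN by (simp add: r'_def)
  have RN: "\<forall>(X, \<alpha>) \<in> Rules G2. X \<in> N \<and> set (nts \<alpha>) \<subseteq> N"
    using wf unfolding is_kDCFG_def N_def by blast
  have ruleP: "\<forall>(X, \<alpha>) \<in> Rules G2. X \<in> N \<and> set (nts \<alpha>) \<subseteq> N \<and> kcorrect k (rk G2) \<alpha> \<and>
      tm_rank (rk G2) \<alpha> = rk G2 X \<and> (\<forall>u \<in> set (leaf_tuples \<alpha>). tup_len u \<le> 1)"
    using wf unfolding is_kDCFG_def N_def by blast
  have "is_kDCFG k G'"
    unfolding is_kDCFG_def
  proof (intro conjI)
    show "finite (NTs G')" using \<open>finite (NTs G2)\<close> by (simp add: G'_def N_def)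
    show "Start G' \<in> NTs G'" using wf unfolding is_kDCFG_def by (simp add: G'_def N_def)
    show "rk G' (Start G') = 0" using wf rr unfolding is_kDCFG_def by (simp add: G'_def N_def)
    show "finite (Rules G')" using wf unfolding is_kDCFG_def by (simp add: G'_def renR_def)
    show "\<forall>(A, \<alpha>)\<in>Rules G'. A \<in> NTs G' \<and> set (nts \<alpha>) \<subseteq> NTs G' \<and> kcorrect k (rk G') \<alpha> \<and>
        tm_rank (rk G') \<alpha> = rk G' A \<and> (\<forall>u\<in>set (leaf_tuples \<alpha>). tup_len u \<le> 1)"
    proof (clarify)
      fix A \<alpha> assume "(A, \<alpha>) \<in> Rules G'"
      then obtain X \<beta> where h: "(X, \<beta>) \<in> Rules G2" "A = f X" "\<alpha> = rn f \<beta>"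
        unfolding G'_def renR_def by auto
      have P: "X \<in> N" "set (nts \<beta>) \<subseteq> N" "kcorrect k (rk G2) \<beta>" "tm_rank (rk G2) \<beta> = rk G2 X"
          "\<forall>u \<in> set (leaf_tuples \<beta>). tup_len u \<le> 1" using ruleP h(1) by auto
      have e: "\<forall>Y\<in>set (nts \<beta>). r' (f Y) = rk G2 Y" using P(2) rr by blast
      have k1: "kcorrect k r' \<alpha>"
        using rn_kcorrect[where \<alpha>=\<beta> and ra=r' and rb="rk G2" and f=f and k=k, OF e] P(3) h(3) by simp
      have k2: "tm_rank r' \<alpha> = r' A"
        using rn_rank[where \<alpha>=\<beta> and ra=r' and rb="rk G2" and f=f, OF e] P(4) h(2,3) rr[OF P(1)] by simp
      have k3: "A \<in> f ` N" using h(2) P(1) by simp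
      have k4: "set (nts \<alpha>) \<subseteq> f ` N" using h(3) P(2) by (auto simp: rn_nts)
      have k5: "\<forall>u\<in>set (leaf_tuples \<alpha>). tup_len u \<le> 1" using h(3) P(5) by (simp add: rn_leaf)
      show "A \<in> NTs G' \<and> set (nts \<alpha>) \<subseteq> NTs G' \<and> kcorrect k (rk G') \<alpha> \<and>
        tm_rank (rk G') \<alpha> = rk G' A \<and> (\<forall>u\<in>set (leaf_tuples \<alpha>). tup_len u \<le> 1)"
        using k1 k2 k3 k4 k5 unfolding G'_def by simp
    qed
  qed
  moreover have "\<forall>r \<in> Rules G'. nf_rule G' r"
  proof
    fix r assume "r \<in> Rules G'"
    then obtain X \<beta> where h: "(X, \<beta>) \<in> Rules G2" "r = (f X, rn f \<beta>)"
      unfolding G'_def renR_def by auto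
    have a: "nf_rule G2 (X, \<beta>)" using nf h by blast
    have b: "Start G' = f (Start G2)" by (simp add: G'_def)
    show "nf_rule G' r" using nf_rule_rn[where f=f, OF a b] h(2) by simp
  qed
  moreover have "Lang G' = Lang G2"
  proof -
    have SN: "Start G2 \<in> N" using wf unfolding is_kDCFG_def N_def by blast
    have "tval (renR f (Rules G2)) (NT (f (Start G2))) v \<longleftrightarrow> tval (Rules G2) (NT (Start G2)) v" for v
    proof
      assume t: "tval (renR f (Rules G2)) (NT (f (Start G2))) v"
      have e: "NT (f (Start G2)) = rn f (NT (Start G2))" by simp
      have s: "set (nts (NT (Start G2))) \<subseteq> N" using SN by simp
      show "tval (Rules G2) (NT (Start G2)) v"
        using tval_rn_back[OF injN RN t e s] .
    next
      assume "tval (Rules G2) (NT (Start G2)) v"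
      from tval_rn[OF this, of f] show "tval (renR f (Rules G2)) (NT (f (Start G2))) v" by simp
    qed
    then have "LL (renR f (Rules G2)) (f (Start G2)) = LL (Rules G2) (Start G2)"
      unfolding LL_def by blast
    then show ?thesis unfolding Lang_def LangNT_LL by (simp add: G'_def)
  qed
  ultimately show ?thesis by blast
qed

theorem lemma2:
  fixes k :: nat and G :: "('a::finite, 'n) dcfg"
  assumes "is_kDCFG k G" and "linear_dcfg G"
  shows "\<exists>G' :: ('a, nat) dcfg. is_kDCFG k G' \<and> (\<forall>r \<in> Rules G'. nf_rule G' r) \<and>
           Lang G' = Lang G"
proof -
  interpret lin k G using assms by unfold_locales
  from rename_grammar[OF conjunct1[OF G2_wf] conjunct2[OF G2_wf]]
  show ?thesis using G2_lang by simp
qed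


end
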